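(* Let $p$ be a prime, $G$ a group, and $H$ a subgroup of $G$ that is closed in the pro-$q$ topology on $G$ for every prime $q$. Let $\Gamma=\langle G,t \mid t^{-1}ht=h\ \text{for all } h\in H\rangle$. If $G$ is residually $p$-finite, then $\Gamma$ is residually $p$-finite.
   Context: The pro-$p$ topology on a group $G$ is the group topology whose basis of neighbourhoods of the identity consists of the normal subgroups of $G$ of $p$-power index. A group is $p$-finite if its order is a finite power of $p$; a group $G$ is residually $p$-finite if for every $g\ne 1$ in $G$ there is a $p$-finite quotient of $G$ in which the image of $g$ is nontrivial. *)

theory Defs
  imports "HOL-Algebra.Algebra" "HOL-Analysis.Abstract_Topology"
begin

definition p_power_index_normal :: "('a, 'b) monoid_scheme \<Rightarrow> nat \<Rightarrow> 'a set \<Rightarrow> bool" where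
  "p_power_index_normal G p N \<longleftrightarrow> N \<lhd> G \<and> (\<exists>n. card (rcosets\<^bsub>G\<^esub> N) = p ^ n)"

definition pro_p_topology :: "('a, 'b) monoid_scheme \<Rightarrow> nat \<Rightarrow> 'a topology" where
  "pro_p_topology G p = topology (\<lambda>U. U \<subseteq> carrier G \<and>
      (\<forall>x\<in>U. \<exists>N. p_power_index_normal G p N \<and> x <#\<^bsub>G\<^esub> N \<subseteq> U))"

definition residually_p_finite :: "('a, 'b) monoid_scheme \<Rightarrow> nat \<Rightarrow> bool" where
  "residually_p_finite G p \<longleftrightarrow>
     (\<forall>g\<in>carrier G. g \<noteq> \<one>\<^bsub>G\<^esub> \<longrightarrow> (\<exists>N. p_power_index_normal G p N \<and> g \<notin> N))"

text \<open>Generators: Inl g for g in G, Inr True = t, Inr False = t^-1.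
  Relations: multiplication table of G, t t^-1 = t^-1 t = 1, t^-1 h t = h for h in H.\<close>

definition hnn_word :: "('a, 'b) monoid_scheme \<Rightarrow> ('a + bool) list \<Rightarrow> bool" where
  "hnn_word G w \<longleftrightarrow> set w \<subseteq> Inl ` carrier G \<union> range Inr"

inductive_set hnn_rel :: "('a, 'b) monoid_scheme \<Rightarrow> 'a set \<Rightarrow> (('a + bool) list \<times> ('a + bool) list) set"
  for G H where
  refl: "hnn_word G w \<Longrightarrow> (w, w) \<in> hnn_rel G H"
| sym: "(u, v) \<in> hnn_rel G H \<Longrightarrow> (v, u) \<in> hnn_rel G H"
| trans: "(u, v) \<in> hnn_rel G H \<Longrightarrow> (v, w) \<in> hnn_rel G H \<Longrightarrow> (u, w) \<in> hnn_rel G H"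
| cong: "(u, v) \<in> hnn_rel G H \<Longrightarrow> (u', v') \<in> hnn_rel G H \<Longrightarrow> (u @ u', v @ v') \<in> hnn_rel G H"
| mult: "g \<in> carrier G \<Longrightarrow> h \<in> carrier G \<Longrightarrow> ([Inl g, Inl h], [Inl (g \<otimes>\<^bsub>G\<^esub> h)]) \<in> hnn_rel G H"
| one: "([Inl \<one>\<^bsub>G\<^esub>], []) \<in> hnn_rel G H"
| t_inv1: "([Inr True, Inr False], []) \<in> hnn_rel G H"
| t_inv2: "([Inr False, Inr True], []) \<in> hnn_rel G H"
| hnn: "h \<in> H \<Longrightarrow> h \<in> carrier G \<Longrightarrow> ([Inr False, Inl h, Inr True], [Inl h]) \<in> hnn_rel G H"

definition HNN_trivial :: "('a, 'b) monoid_scheme \<Rightarrow> 'a set \<Rightarrow> ('a + bool) list set monoid" where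
  "HNN_trivial G H =
     \<lparr> carrier = {w. hnn_word G w} // hnn_rel G H,
       monoid.mult = (\<lambda>A B. {w. \<exists>a\<in>A. \<exists>b\<in>B. (a @ b, w) \<in> hnn_rel G H}),
       monoid.one = {w. ([], w) \<in> hnn_rel G H} \<rparr>"

end

theory Submission
  imports Defs
begin


lemma only_p_power:
  fixes p n :: nat
  assumes p: "Factorial_Ring.prime p" and n: "0 < n"
    and q: "\<And>q. Factorial_Ring.prime q \<Longrightarrow> q dvd n \<Longrightarrow> q = p"
  shows "\<exists>k. n = p ^ k"
  using n q
proof (induction n rule: less_induct)
  case (less n)
  show ?case
  proof (cases "n = 1")
    case True then show ?thesis by (intro exI[of _ 0]) simp
  next
    case False
    then obtain q where qp: "Factorial_Ring.prime q" "q dvd n"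
      using prime_factor_nat by blast
    then have "q = p" using less by blast
    then obtain n' where n': "n = p * n'" using qp by auto
    have p1: "p > 1" using p prime_gt_1_nat by blast
    have "0 < n'" using n' less(2) by simp
    moreover have "n' < n" using n' p1 \<open>0 < n'\<close> by simp
    moreover have "\<And>q. Factorial_Ring.prime q \<Longrightarrow> q dvd n' \<Longrightarrow> q = p"
      using less(3) n' by auto
    ultimately obtain k where "n' = p ^ k" using less(1) by blast
    then show ?thesis using n' by (intro exI[of _ "Suc k"]) simp
  qed
qed

lemma kernel_card:
  assumes K: "group K" and Q: "group Q" and h: "\<phi> \<in> hom K Q"
  shows "card (rcosets\<^bsub>K\<^esub> (kernel K Q \<phi>)) = card (\<phi> ` carrier K)"
proof -
  let ?Q' = "Q\<lparr>carrier := \<phi> ` carrier K\<rparr>"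
  have gh0: "group_hom K Q \<phi>" using K Q h by (simp add: group_hom_def group_hom_axioms_def)
  have sub: "subgroup (\<phi> ` carrier K) Q" using group_hom.img_is_subgroup[OF gh0] .
  have gQ': "group ?Q'" using group.subgroup_imp_group[OF Q sub] .
  have "\<phi> \<in> hom K ?Q'" using h by (auto simp: hom_def)
  then have gh: "group_hom K ?Q' \<phi>" using K gQ' by (simp add: group_hom_def group_hom_axioms_def)
  have ker: "kernel K ?Q' \<phi> = kernel K Q \<phi>" by (simp add: kernel_def)
  have "(\<lambda>Z. the_elem (\<phi> ` Z)) \<in> iso (FactGroup K (kernel K ?Q' \<phi>)) ?Q'"
    by (rule group_hom.FactGroup_iso_set[OF gh]) simp
  then have "bij_betw (\<lambda>Z. the_elem (\<phi> ` Z)) (rcosets\<^bsub>K\<^esub> (kernel K Q \<phi>)) (\<phi> ` carrier K)"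
    by (simp add: iso_def ker FactGroup_def)
  then show ?thesis by (rule bij_betw_same_card)
qed

lemma subgroup_p_power:
  assumes Q: "group Q" and fin: "finite (carrier Q)" and p: "Factorial_Ring.prime p"
    and ord: "order Q = p ^ n" and S: "subgroup S Q"
  shows "\<exists>j. card S = p ^ j"
proof -
  have "card (rcosets\<^bsub>Q\<^esub> S) * card S = order Q" using group.lagrange[OF Q S] .
  then have "card S dvd p ^ n" using ord by (metis dvd_triv_right)
  then show ?thesis using divides_primepow_nat[OF p] by blast
qed

lemma exponent_p_power:
  assumes Q: "group Q" and fin: "finite (carrier Q)" and p: "Factorial_Ring.prime p"
    and ex: "\<And>x. x \<in> carrier Q \<Longrightarrow> x [^]\<^bsub>Q\<^esub> ((p::nat) ^ k) = \<one>\<^bsub>Q\<^esub>"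
  shows "\<exists>n. order Q = p ^ n"
proof (rule only_p_power[OF p])
  show "0 < order Q" using fin monoid.one_closed[OF group.is_monoid[OF Q]] by (auto simp: order_def card_gt_0_iff)
next
  fix q assume q: "Factorial_Ring.prime q" "q dvd order Q"
  then obtain m where m: "order Q = q ^ 1 * m" by auto
  obtain S where S: "subgroup S Q" "card S = q ^ 1" using sylow_thm[OF q(1) Q m fin] by blast
  have "card S \<noteq> 0" using S(2) q(1) prime_gt_0_nat by simp
  then have finS: "finite S" by (meson card.infinite)
  have "card S > 1" using S(2) q(1) prime_gt_1_nat by simp
  then have "\<not> (\<forall>x\<in>S. \<forall>y\<in>S. x = y)" using card_le_Suc0_iff_eq[OF finS] by simp
  then obtain x where x: "x \<in> S" "x \<noteq> \<one>\<^bsub>Q\<^esub>" by blast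
  have xQ: "x \<in> carrier Q" using S(1) x(1) subgroup.subset by blast
  let ?S = "Q\<lparr>carrier := S\<rparr>"
  have gS: "group ?S" using group.subgroup_imp_group[OF Q S(1)] .
  have "x [^]\<^bsub>?S\<^esub> order ?S = \<one>\<^bsub>?S\<^esub>" using group.pow_order_eq_1[OF gS] x(1) by simp
  moreover have "x [^]\<^bsub>?S\<^esub> (order ?S) = x [^]\<^bsub>Q\<^esub> (order ?S)"
    using monoid.nat_pow_consistent[OF group.is_monoid[OF Q]] by simp
  ultimately have xq: "x [^]\<^bsub>Q\<^esub> q = \<one>\<^bsub>Q\<^esub>" using S(2) by (simp add: order_def)
  have d1: "group.ord Q x dvd q" using group.pow_eq_id[OF Q xQ] xq by simp
  have d2: "group.ord Q x dvd p ^ k" using group.pow_eq_id[OF Q xQ] ex[OF xQ] by simp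
  have "group.ord Q x \<noteq> 1" using group.ord_eq_1[OF Q xQ] x(2) by simp
  then have "group.ord Q x = q" using d1 q(1) by (meson prime_nat_iff)
  then have "q dvd p ^ k" using d2 by simp
  then show "q = p" using q(1) p by (metis prime_dvd_power_nat primes_dvd_imp_eq)
qed


lemma ppin_finite:
  assumes "Factorial_Ring.prime p" "p_power_index_normal G p N"
  shows "finite (rcosets\<^bsub>G\<^esub> N)"
proof -
  obtain n where "card (rcosets\<^bsub>G\<^esub> N) = p ^ n" using assms(2) by (auto simp: p_power_index_normal_def)
  moreover have "p ^ n \<noteq> 0" using assms(1) prime_gt_0_nat by simp
  ultimately show ?thesis by (metis card.infinite)
qed

lemma ppin_inter:
  assumes G: "group G" and p: "Factorial_Ring.prime p"
    and N1: "p_power_index_normal G p N1" and N2: "p_power_index_normal G p N2"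
  shows "p_power_index_normal G p (N1 \<inter> N2)"
proof -
  have n1: "N1 \<lhd> G" and n2: "N2 \<lhd> G" using N1 N2 by (auto simp: p_power_index_normal_def)
  obtain a where a: "card (rcosets\<^bsub>G\<^esub> N1) = p ^ a" using N1 by (auto simp: p_power_index_normal_def)
  obtain b where b: "card (rcosets\<^bsub>G\<^esub> N2) = p ^ b" using N2 by (auto simp: p_power_index_normal_def)
  let ?Q = "(G Mod N1) \<times>\<times> (G Mod N2)"
  let ?f = "\<lambda>x. (N1 #>\<^bsub>G\<^esub> x, N2 #>\<^bsub>G\<^esub> x)"
  have gQ: "group ?Q" using DirProd_group normal.factorgroup_is_group n1 n2 by blast
  have hom: "?f \<in> hom G ?Q"
    by (rule homI) (auto simp: FactGroup_def RCOSETS_def normal.rcos_sum[OF n1] normal.rcos_sum[OF n2])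
  have ker: "kernel G ?Q ?f = N1 \<inter> N2"
  proof -
    have s1: "subgroup N1 G" and s2: "subgroup N2 G" using n1 n2 normal_imp_subgroup by auto
    show ?thesis
      using group.coset_join1[OF G _ _ s1] group.coset_join1[OF G _ _ s2]
        group.coset_join2[OF G _ s1] group.coset_join2[OF G _ s2]
        subgroup.subset[OF s1] subgroup.subset[OF s2]
      by (auto simp: kernel_def)
  qed
  have gh: "group_hom G ?Q ?f" using G gQ hom by (simp add: group_hom_def group_hom_axioms_def)
  have finQ: "finite (carrier ?Q)"
    using ppin_finite[OF p N1] ppin_finite[OF p N2] by (simp add: FactGroup_def)
  have ordQ: "order ?Q = p ^ (a + b)"
    using a b by (simp add: order_def FactGroup_def card_cartesian_product power_add)
  obtain j where j: "card (?f ` carrier G) = p ^ j"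
    using subgroup_p_power[OF gQ finQ p ordQ group_hom.img_is_subgroup[OF gh]] by blast
  have "card (rcosets\<^bsub>G\<^esub> (N1 \<inter> N2)) = p ^ j" using kernel_card[OF G gQ hom] ker j by simp
  moreover have "N1 \<inter> N2 \<lhd> G" using group_hom.normal_kernel[OF gh] ker by simp
  ultimately show ?thesis by (auto simp: p_power_index_normal_def)
qed

lemma ppin_carrier:
  assumes "group G" shows "p_power_index_normal G p (carrier G)"
proof -
  have "carrier G \<lhd> G" using assms by (simp add: group.normal_self)
  moreover have "rcosets\<^bsub>G\<^esub> (carrier G) = {carrier G}"
    using assms monoid.one_closed[OF group.is_monoid[OF assms]] by (auto simp: RCOSETS_def group.coset_join2 group.subgroup_self)
  ultimately show ?thesis by (auto simp: p_power_index_normal_def intro: exI[of _ 0])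
qed

lemma pro_p_istop:
  assumes G: "group G" and p: "Factorial_Ring.prime p"
  shows "istopology (\<lambda>U. U \<subseteq> carrier G \<and>
      (\<forall>x\<in>U. \<exists>N. p_power_index_normal G p N \<and> x <#\<^bsub>G\<^esub> N \<subseteq> U))"
    unfolding istopology_def
  proof (rule conjI; intro allI impI)
    fix S T assume S: "S \<subseteq> carrier G \<and> (\<forall>x\<in>S. \<exists>N. p_power_index_normal G p N \<and> x <#\<^bsub>G\<^esub> N \<subseteq> S)"
      and T: "T \<subseteq> carrier G \<and> (\<forall>x\<in>T. \<exists>N. p_power_index_normal G p N \<and> x <#\<^bsub>G\<^esub> N \<subseteq> T)"
    show "S \<inter> T \<subseteq> carrier G \<and> (\<forall>x\<in>S \<inter> T. \<exists>N. p_power_index_normal G p N \<and> x <#\<^bsub>G\<^esub> N \<subseteq> S \<inter> T)"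
    proof (intro conjI ballI)
      show "S \<inter> T \<subseteq> carrier G" using S by blast
      fix x assume "x \<in> S \<inter> T"
      then obtain N1 N2 where "p_power_index_normal G p N1" "x <#\<^bsub>G\<^esub> N1 \<subseteq> S"
        "p_power_index_normal G p N2" "x <#\<^bsub>G\<^esub> N2 \<subseteq> T" using S T by blast
      then show "\<exists>N. p_power_index_normal G p N \<and> x <#\<^bsub>G\<^esub> N \<subseteq> S \<inter> T"
        by (intro exI[of _ "N1 \<inter> N2"]) (auto simp: ppin_inter[OF G p] l_coset_def)
    qed
  next
    fix K assume K: "\<forall>S\<in>K. S \<subseteq> carrier G \<and> (\<forall>x\<in>S. \<exists>N. p_power_index_normal G p N \<and> x <#\<^bsub>G\<^esub> N \<subseteq> S)"
    show "\<Union> K \<subseteq> carrier G \<and> (\<forall>x\<in>\<Union> K. \<exists>N. p_power_index_normal G p N \<and> x <#\<^bsub>G\<^esub> N \<subseteq> \<Union> K)"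
    proof (intro conjI ballI)
      show "\<Union> K \<subseteq> carrier G" using K by blast
      fix x assume "x \<in> \<Union> K"
      then obtain S where S: "S \<in> K" "x \<in> S" by blast
      then have "S \<subseteq> carrier G \<and> (\<forall>x\<in>S. \<exists>N. p_power_index_normal G p N \<and> x <#\<^bsub>G\<^esub> N \<subseteq> S)"
        using K by simp
      then obtain N where "p_power_index_normal G p N" "x <#\<^bsub>G\<^esub> N \<subseteq> S" using S(2) by blast
      then show "\<exists>N. p_power_index_normal G p N \<and> x <#\<^bsub>G\<^esub> N \<subseteq> \<Union> K" using S(1) by blast
    qed
  qed

lemma pro_p_open:
  assumes G: "group G" and p: "Factorial_Ring.prime p"
  shows "openin (pro_p_topology G p) = (\<lambda>U. U \<subseteq> carrier G \<and>
      (\<forall>x\<in>U. \<exists>N. p_power_index_normal G p N \<and> x <#\<^bsub>G\<^esub> N \<subseteq> U))"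
  unfolding pro_p_topology_def using topology_inverse'[OF pro_p_istop[OF G p]] .

lemma closed_sep:
  assumes G: "group G" and p: "Factorial_Ring.prime p"
    and cl: "closedin (pro_p_topology G p) H" and x: "x \<in> carrier G" "x \<notin> H"
  shows "\<exists>N. p_power_index_normal G p N \<and> (x <#\<^bsub>G\<^esub> N) \<inter> H = {}"
proof -
  have top: "topspace (pro_p_topology G p) = carrier G"
  proof
    show "topspace (pro_p_topology G p) \<subseteq> carrier G"
      unfolding topspace_def using pro_p_open[OF G p] by auto
    have "openin (pro_p_topology G p) (carrier G)"
      unfolding pro_p_open[OF G p]
      using ppin_carrier[OF G] by (auto simp: l_coset_def intro!: exI[of _ "carrier G"] group.subgroupE(4)[OF G group.subgroup_self[OF G]])
    then show "carrier G \<subseteq> topspace (pro_p_topology G p)" by (auto simp: topspace_def)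
  qed
  have "openin (pro_p_topology G p) (carrier G - H)"
    using cl top by (simp add: closedin_def)
  then obtain N where "p_power_index_normal G p N" "x <#\<^bsub>G\<^esub> N \<subseteq> carrier G - H"
    using x unfolding pro_p_open[OF G p] by blast
  then show ?thesis by blast
qed


fun invl :: "('a, 'b) monoid_scheme \<Rightarrow> ('a + bool) \<Rightarrow> ('a + bool)" where
  "invl G (Inl g) = Inl (inv\<^bsub>G\<^esub> g)"
| "invl G (Inr b) = Inr (\<not> b)"

definition invw :: "('a, 'b) monoid_scheme \<Rightarrow> ('a + bool) list \<Rightarrow> ('a + bool) list" where
  "invw G w = rev (map (invl G) w)"

context
  fixes G :: "('a, 'b) monoid_scheme" and H :: "'a set"
  assumes G: "group G"
begin

lemma hnn_word_append[simp]: "hnn_word G (u @ v) \<longleftrightarrow> hnn_word G u \<and> hnn_word G v"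
  by (auto simp: hnn_word_def)

lemma hnn_word_Cons[simp]: "hnn_word G (x # v) \<longleftrightarrow> x \<in> Inl ` carrier G \<union> range Inr \<and> hnn_word G v"
  by (auto simp: hnn_word_def)

lemma hnn_word_Nil[simp]: "hnn_word G []"
  by (auto simp: hnn_word_def)

lemma hnn_rel_words: "(u, v) \<in> hnn_rel G H \<Longrightarrow> hnn_word G u \<and> hnn_word G v"
  by (induction rule: hnn_rel.induct)
     (auto simp: hnn_word_def group.subgroupE(4)[OF G group.subgroup_self[OF G]] monoid.one_closed[OF group.is_monoid[OF G]])

lemma hnn_equiv: "equiv {w. hnn_word G w} (hnn_rel G H)"
proof (rule equivI)
  show "hnn_rel G H \<subseteq> {w. hnn_word G w} \<times> {w. hnn_word G w}" using hnn_rel_words by auto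
  show "refl_on {w. hnn_word G w} (hnn_rel G H)"
    by (auto simp: refl_on_def dest: hnn_rel_words intro: hnn_rel.refl)
  show "sym (hnn_rel G H)" by (auto simp: sym_def intro: hnn_rel.sym)
  show "trans (hnn_rel G H)" by (auto simp: trans_def intro: hnn_rel.trans)
qed

lemma class_eq_iff:
  "hnn_word G u \<Longrightarrow> hnn_word G v \<Longrightarrow> hnn_rel G H `` {u} = hnn_rel G H `` {v} \<longleftrightarrow> (u, v) \<in> hnn_rel G H"
  using eq_equiv_class_iff[OF hnn_equiv] by simp

lemma Gam_mult:
  assumes "hnn_word G a" "hnn_word G b"
  shows "hnn_rel G H `` {a} \<otimes>\<^bsub>HNN_trivial G H\<^esub> hnn_rel G H `` {b} = hnn_rel G H `` {a @ b}"
proof -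
  have "{w. \<exists>a'\<in>hnn_rel G H `` {a}. \<exists>b'\<in>hnn_rel G H `` {b}. (a' @ b', w) \<in> hnn_rel G H}
      = hnn_rel G H `` {a @ b}"
  proof (intro equalityI subsetI)
    fix w assume "w \<in> {w. \<exists>a'\<in>hnn_rel G H `` {a}. \<exists>b'\<in>hnn_rel G H `` {b}. (a' @ b', w) \<in> hnn_rel G H}"
    then obtain a' b' where "(a, a') \<in> hnn_rel G H" "(b, b') \<in> hnn_rel G H" "(a' @ b', w) \<in> hnn_rel G H" by auto
    then show "w \<in> hnn_rel G H `` {a @ b}" by (auto intro: hnn_rel.cong hnn_rel.trans)
  next
    fix w assume "w \<in> hnn_rel G H `` {a @ b}"
    then show "w \<in> {w. \<exists>a'\<in>hnn_rel G H `` {a}. \<exists>b'\<in>hnn_rel G H `` {b}. (a' @ b', w) \<in> hnn_rel G H}"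
      using assms by (auto intro: hnn_rel.refl)
  qed
  then show ?thesis by (simp add: HNN_trivial_def)
qed

lemma Gam_one: "\<one>\<^bsub>HNN_trivial G H\<^esub> = hnn_rel G H `` {[]}"
  by (auto simp: HNN_trivial_def)

lemma Gam_carrier: "carrier (HNN_trivial G H) = {w. hnn_word G w} // hnn_rel G H"
  by (simp add: HNN_trivial_def)

lemma letter_inv: "hnn_word G [x] \<Longrightarrow> ([x, invl G x], []) \<in> hnn_rel G H"
proof (cases x)
  case (Inl g)
  assume "hnn_word G [x]"
  then have g: "g \<in> carrier G" using Inl by (auto simp: hnn_word_def)
  have "([Inl g, Inl (inv\<^bsub>G\<^esub> g)], [Inl (g \<otimes>\<^bsub>G\<^esub> inv\<^bsub>G\<^esub> g)]) \<in> hnn_rel G H"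
    using g G by (intro hnn_rel.mult) auto
  moreover have "g \<otimes>\<^bsub>G\<^esub> inv\<^bsub>G\<^esub> g = \<one>\<^bsub>G\<^esub>" using group.r_inv[OF G g] .
  ultimately show ?thesis using Inl by (auto intro: hnn_rel.trans hnn_rel.one)
next
  case (Inr b)
  then show ?thesis by (cases b) (auto intro: hnn_rel.t_inv1 hnn_rel.t_inv2)
qed

lemma invw_word: "hnn_word G w \<Longrightarrow> hnn_word G (invw G w)"
proof (induction w)
  case (Cons x w)
  then have "hnn_word G [invl G x]" using G by (cases x) (auto simp: hnn_word_def)
  then show ?case using Cons by (auto simp: invw_def hnn_word_def)
qed (simp add: invw_def)

lemma invw_inv: "hnn_word G w \<Longrightarrow> invw G (invw G w) = w"
proof (induction w)
  case (Cons x w)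
  have "invl G (invl G x) = x" using Cons.prems G by (cases x) (auto simp: hnn_word_def)
  then show ?case using Cons by (auto simp: invw_def)
qed (simp add: invw_def)

lemma w_invw: "hnn_word G w \<Longrightarrow> (w @ invw G w, []) \<in> hnn_rel G H"
proof (induction w)
  case Nil then show ?case by (auto simp: invw_def intro: hnn_rel.refl)
next
  case (Cons x w)
  have x: "hnn_word G [x]" and w: "hnn_word G w" using Cons.prems by auto
  have xi: "hnn_word G [invl G x]" using x G by (cases x) (auto simp: hnn_word_def)
  have "([x] @ (w @ invw G w) @ [invl G x], [x] @ [] @ [invl G x]) \<in> hnn_rel G H"
    using Cons.IH[OF w] x xi by (intro hnn_rel.cong hnn_rel.refl) auto
  then have "([x] @ (w @ invw G w) @ [invl G x], []) \<in> hnn_rel G H"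
    using letter_inv[OF x] by (auto intro: hnn_rel.trans)
  then show ?case by (simp add: invw_def)
qed

lemma Gam_group: "group (HNN_trivial G H)"
proof (rule groupI)
  fix x y assume x: "x \<in> carrier (HNN_trivial G H)" and y: "y \<in> carrier (HNN_trivial G H)"
  then obtain a b where "x = hnn_rel G H `` {a}" "hnn_word G a" "y = hnn_rel G H `` {b}" "hnn_word G b"
    by (auto simp: Gam_carrier elim!: quotientE)
  then show "x \<otimes>\<^bsub>HNN_trivial G H\<^esub> y \<in> carrier (HNN_trivial G H)"
    by (simp add: Gam_mult Gam_carrier quotientI)
next
  show "\<one>\<^bsub>HNN_trivial G H\<^esub> \<in> carrier (HNN_trivial G H)"
    by (simp add: Gam_one Gam_carrier quotientI)
next
  fix x y z assume x: "x \<in> carrier (HNN_trivial G H)" and y: "y \<in> carrier (HNN_trivial G H)"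
    and z: "z \<in> carrier (HNN_trivial G H)"
  then obtain a b c where "x = hnn_rel G H `` {a}" "hnn_word G a" "y = hnn_rel G H `` {b}" "hnn_word G b"
     "z = hnn_rel G H `` {c}" "hnn_word G c"
    by (auto simp: Gam_carrier elim!: quotientE)
  then show "x \<otimes>\<^bsub>HNN_trivial G H\<^esub> y \<otimes>\<^bsub>HNN_trivial G H\<^esub> z =
      x \<otimes>\<^bsub>HNN_trivial G H\<^esub> (y \<otimes>\<^bsub>HNN_trivial G H\<^esub> z)"
    by (simp add: Gam_mult)
next
  fix x assume x: "x \<in> carrier (HNN_trivial G H)"
  then obtain a where "x = hnn_rel G H `` {a}" "hnn_word G a"
    by (auto simp: Gam_carrier elim!: quotientE)
  then show "\<one>\<^bsub>HNN_trivial G H\<^esub> \<otimes>\<^bsub>HNN_trivial G H\<^esub> x = x"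
    by (simp add: Gam_mult Gam_one)
next
  fix x assume x: "x \<in> carrier (HNN_trivial G H)"
  then obtain a where a: "x = hnn_rel G H `` {a}" "hnn_word G a"
    by (auto simp: Gam_carrier elim!: quotientE)
  have iw: "hnn_word G (invw G a)" using invw_word[OF a(2)] .
  have "(invw G a @ invw G (invw G a), []) \<in> hnn_rel G H" using w_invw[OF iw] .
  then have "(invw G a @ a, []) \<in> hnn_rel G H" using invw_inv[OF a(2)] by simp
  then have "hnn_rel G H `` {invw G a @ a} = hnn_rel G H `` {[]}"
    using class_eq_iff iw a(2) by simp
  then show "\<exists>y\<in>carrier (HNN_trivial G H). y \<otimes>\<^bsub>HNN_trivial G H\<^esub> x = \<one>\<^bsub>HNN_trivial G H\<^esub>"
    using a iw by (intro bexI[of _ "hnn_rel G H `` {invw G a}"]) (auto simp: Gam_mult Gam_one Gam_carrier quotientI)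
qed

end


definition evl :: "('c, 'd) monoid_scheme \<Rightarrow> ('a \<Rightarrow> 'c) \<Rightarrow> 'c \<Rightarrow> ('a + bool) \<Rightarrow> 'c" where
  "evl Q f \<tau> x = (case x of Inl g \<Rightarrow> f g | Inr b \<Rightarrow> (if b then \<tau> else inv\<^bsub>Q\<^esub> \<tau>))"

definition evw :: "('c, 'd) monoid_scheme \<Rightarrow> ('a \<Rightarrow> 'c) \<Rightarrow> 'c \<Rightarrow> ('a + bool) list \<Rightarrow> 'c" where
  "evw Q f \<tau> w = foldr (\<lambda>x acc. evl Q f \<tau> x \<otimes>\<^bsub>Q\<^esub> acc) w \<one>\<^bsub>Q\<^esub>"

definition Phi :: "('c, 'd) monoid_scheme \<Rightarrow> ('a \<Rightarrow> 'c) \<Rightarrow> 'c \<Rightarrow> ('a + bool) list set \<Rightarrow> 'c" where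
  "Phi Q f \<tau> A = evw Q f \<tau> (SOME a. a \<in> A)"

locale hnn_univ = G: group G + Q: group Q
  for G :: "('a, 'b) monoid_scheme" and Q :: "('c, 'd) monoid_scheme" +
  fixes H :: "'a set" and f \<tau>
  assumes f: "f \<in> hom G Q" and \<tau>: "\<tau> \<in> carrier Q"
    and comm: "\<And>h. h \<in> H \<Longrightarrow> h \<in> carrier G \<Longrightarrow> f h \<otimes>\<^bsub>Q\<^esub> \<tau> = \<tau> \<otimes>\<^bsub>Q\<^esub> f h"
begin

lemma G: "group G" by (rule G.group_axioms)
lemma Q: "group Q" by (rule Q.group_axioms)
lemma fgh: "group_hom G Q f" using G Q f by (simp add: group_hom_def group_hom_axioms_def)

lemma evl_closed: "x \<in> Inl ` carrier G \<union> range Inr \<Longrightarrow> evl Q f \<tau> x \<in> carrier Q"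
  using f \<tau> Q by (auto simp: evl_def hom_def)

lemma evw_closed: "hnn_word G w \<Longrightarrow> evw Q f \<tau> w \<in> carrier Q"
  by (induction w) (auto simp: evw_def hnn_word_Cons[OF G] evl_closed group.subgroupE(4)[OF Q group.subgroup_self[OF Q]]
       monoid.one_closed[OF group.is_monoid[OF Q]] hnn_word_def)

lemma evw_append: "hnn_word G u \<Longrightarrow> hnn_word G v \<Longrightarrow> evw Q f \<tau> (u @ v) = evw Q f \<tau> u \<otimes>\<^bsub>Q\<^esub> evw Q f \<tau> v"
proof (induction u)
  case Nil then show ?case using evw_closed[OF Nil(2)] Q by (simp add: evw_def)
next
  case (Cons x u)
  then have x: "x \<in> Inl ` carrier G \<union> range Inr" and u: "hnn_word G u" by (auto simp: hnn_word_Cons[OF G])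
  have "evw Q f \<tau> ((x # u) @ v) = evl Q f \<tau> x \<otimes>\<^bsub>Q\<^esub> evw Q f \<tau> (u @ v)" by (simp add: evw_def)
  also have "\<dots> = evl Q f \<tau> x \<otimes>\<^bsub>Q\<^esub> (evw Q f \<tau> u \<otimes>\<^bsub>Q\<^esub> evw Q f \<tau> v)" using Cons u by simp
  also have "\<dots> = (evl Q f \<tau> x \<otimes>\<^bsub>Q\<^esub> evw Q f \<tau> u) \<otimes>\<^bsub>Q\<^esub> evw Q f \<tau> v"
    using evl_closed[OF x] evw_closed[OF u] evw_closed[OF Cons(3)] Q by (simp add: group.is_monoid monoid.m_assoc)
  finally show ?case by (simp add: evw_def)
qed

lemma evw_single: "x \<in> Inl ` carrier G \<union> range Inr \<Longrightarrow> evw Q f \<tau> [x] = evl Q f \<tau> x"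
  using evl_closed Q by (simp add: evw_def)

lemma evw_rel: "(u, v) \<in> hnn_rel G H \<Longrightarrow> evw Q f \<tau> u = evw Q f \<tau> v"
proof (induction rule: hnn_rel.induct)
  case (cong u v u' v')
  then show ?case using hnn_rel_words[OF G] by (simp add: evw_append)
next
  case (mult g h)
  then show ?case using f G
    by (simp add: evw_def evl_def hom_mult group.subgroupE(4)[OF G group.subgroup_self[OF G]]
        Q group.is_monoid monoid.m_assoc hom_in_carrier monoid.r_one)
next
  case one
  then show ?case using group_hom.hom_one[OF fgh] by (simp add: evw_def evl_def)
next
  case t_inv1
  then show ?case using \<tau> Q by (simp add: evw_def evl_def)
next
  case t_inv2
  then show ?case using \<tau> Q by (simp add: evw_def evl_def)
next
  case (hnn h)
  have fh: "f h \<in> carrier Q" using f hnn(2) by (simp add: hom_in_carrier)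
  have "evw Q f \<tau> [Inr False, Inl h, Inr True] = inv\<^bsub>Q\<^esub> \<tau> \<otimes>\<^bsub>Q\<^esub> (f h \<otimes>\<^bsub>Q\<^esub> \<tau>)"
    using fh \<tau> Q by (simp add: evw_def evl_def)
  also have "\<dots> = inv\<^bsub>Q\<^esub> \<tau> \<otimes>\<^bsub>Q\<^esub> (\<tau> \<otimes>\<^bsub>Q\<^esub> f h)" using comm hnn by simp
  also have "\<dots> = f h" using fh \<tau> Q by (simp add: group.inv_solve_left' group.l_inv monoid.m_assoc[symmetric] group.is_monoid)
  finally show ?case using fh Q by (simp add: evw_def evl_def)
qed auto

lemma Phi_class: "hnn_word G a \<Longrightarrow> Phi Q f \<tau> (hnn_rel G H `` {a}) = evw Q f \<tau> a"
proof -
  assume a: "hnn_word G a"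
  have "a \<in> hnn_rel G H `` {a}" using a by (auto intro: hnn_rel.refl)
  then have "(a, SOME b. b \<in> hnn_rel G H `` {a}) \<in> hnn_rel G H" by (metis Image_singleton_iff someI)
  then show ?thesis unfolding Phi_def by (simp add: evw_rel)
qed

lemma Phi_hom: "Phi Q f \<tau> \<in> hom (HNN_trivial G H) Q"
proof (rule homI)
  fix x assume "x \<in> carrier (HNN_trivial G H)"
  then obtain a where "x = hnn_rel G H `` {a}" "hnn_word G a"
    by (auto simp: Gam_carrier[OF G] elim!: quotientE)
  then show "Phi Q f \<tau> x \<in> carrier Q" by (simp add: Phi_class evw_closed)
next
  fix x y assume x: "x \<in> carrier (HNN_trivial G H)" and y: "y \<in> carrier (HNN_trivial G H)"
  then obtain a b where "x = hnn_rel G H `` {a}" "hnn_word G a" "y = hnn_rel G H `` {b}" "hnn_word G b"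
    by (auto simp: Gam_carrier[OF G] elim!: quotientE)
  then show "Phi Q f \<tau> (x \<otimes>\<^bsub>HNN_trivial G H\<^esub> y) = Phi Q f \<tau> x \<otimes>\<^bsub>Q\<^esub> Phi Q f \<tau> y"
    using hnn_word_append[OF G, of a b] by (simp add: Gam_mult[OF G] Phi_class evw_append)
qed

end


locale hnn_ctx = G: group G for G :: "('a, 'b) monoid_scheme" +
  fixes H :: "'a set"
  assumes H: "subgroup H G"

sublocale hnn_ctx \<subseteq> Gm: group "HNN_trivial G H"
  by (rule Gam_group[OF G.group_axioms])

lemma (in group) comm_inv:
  assumes x: "x \<in> carrier G" and y: "y \<in> carrier G" and c: "x \<otimes> y = y \<otimes> x"
  shows "inv x \<otimes> y = y \<otimes> inv x"
proof -
  have "inv x \<otimes> y = inv x \<otimes> y \<otimes> (x \<otimes> inv x)" using x y by simp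
  also have "\<dots> = inv x \<otimes> (y \<otimes> x) \<otimes> inv x" using x y by (simp add: m_assoc)
  also have "\<dots> = inv x \<otimes> (x \<otimes> y) \<otimes> inv x" using c by simp
  also have "\<dots> = y \<otimes> inv x" using x y by (simp add: m_assoc[symmetric])
  finally show ?thesis .
qed

context hnn_ctx begin

definition iota :: "'a \<Rightarrow> ('a + bool) list set" where
  "iota g = hnn_rel G H `` {[Inl g]}"

definition Tt :: "('a + bool) list set" where
  "Tt = hnn_rel G H `` {[Inr True]}"

abbreviation "R \<equiv> hnn_rel G H"
abbreviation "Gam \<equiv> HNN_trivial G H"

lemma word_letter_Inl: "g \<in> carrier G \<Longrightarrow> hnn_word G [Inl g]" by (simp add: hnn_word_def)
lemma word_letter_Inr: "hnn_word G [Inr b]" by (simp add: hnn_word_def)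

lemma iota_closed[simp]: "g \<in> carrier G \<Longrightarrow> iota g \<in> carrier Gam"
  by (simp add: iota_def Gam_carrier[OF G.group_axioms] quotientI hnn_word_def)

lemma Tt_closed[simp]: "Tt \<in> carrier Gam"
  by (simp add: Tt_def Gam_carrier[OF G.group_axioms] quotientI hnn_word_def)

lemma class_closed: "hnn_word G w \<Longrightarrow> R `` {w} \<in> carrier Gam"
  by (simp add: Gam_carrier[OF G.group_axioms] quotientI)

lemma class_Cons: "hnn_word G (x # w) \<Longrightarrow> R `` {x # w} = R `` {[x]} \<otimes>\<^bsub>Gam\<^esub> R `` {w}"
  using Gam_mult[OF G.group_axioms, of "[x]" w H] by (simp add: hnn_word_def)

lemma iota_mult: "g \<in> carrier G \<Longrightarrow> h \<in> carrier G \<Longrightarrow> iota (g \<otimes>\<^bsub>G\<^esub> h) = iota g \<otimes>\<^bsub>Gam\<^esub> iota h"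
proof -
  assume g: "g \<in> carrier G" and h: "h \<in> carrier G"
  have "iota g \<otimes>\<^bsub>Gam\<^esub> iota h = R `` {[Inl g, Inl h]}"
    using Gam_mult[OF G.group_axioms, of "[Inl g]" "[Inl h]" H] g h by (simp add: iota_def hnn_word_def)
  also have "\<dots> = iota (g \<otimes>\<^bsub>G\<^esub> h)"
    unfolding iota_def using g h
    by (subst class_eq_iff[OF G.group_axioms]) (auto simp: hnn_word_def intro: hnn_rel.mult)
  finally show ?thesis by simp
qed

lemma iota_one[simp]: "iota \<one>\<^bsub>G\<^esub> = \<one>\<^bsub>Gam\<^esub>"
  unfolding iota_def Gam_one[OF G.group_axioms]
  by (subst class_eq_iff[OF G.group_axioms]) (auto simp: hnn_word_def intro: hnn_rel.one)

lemma iota_inv: "g \<in> carrier G \<Longrightarrow> iota (inv\<^bsub>G\<^esub> g) = inv\<^bsub>Gam\<^esub> iota g"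
proof -
  assume g: "g \<in> carrier G"
  have "iota (inv\<^bsub>G\<^esub> g) \<otimes>\<^bsub>Gam\<^esub> iota g = \<one>\<^bsub>Gam\<^esub>"
    using g by (simp add: iota_mult[symmetric])
  then show ?thesis using g by (simp add: Gm.inv_equality)
qed

lemma Tinv: "R `` {[Inr False]} = inv\<^bsub>Gam\<^esub> Tt"
proof -
  have "R `` {[Inr False]} \<otimes>\<^bsub>Gam\<^esub> Tt = R `` {[Inr False, Inr True]}"
    using Gam_mult[OF G.group_axioms, of "[Inr False]" "[Inr True]" H] by (simp add: Tt_def hnn_word_def rangeI)
  also have "\<dots> = \<one>\<^bsub>Gam\<^esub>"
    unfolding Gam_one[OF G.group_axioms]
    by (subst class_eq_iff[OF G.group_axioms]) (auto simp: hnn_word_def intro: hnn_rel.t_inv2)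
  finally have e: "R `` {[Inr False]} \<otimes>\<^bsub>Gam\<^esub> Tt = \<one>\<^bsub>Gam\<^esub>" .
  have "R `` {[Inr False]} \<in> carrier Gam" using class_closed[of "[Inr False]"] by (simp add: hnn_word_def rangeI)
  then show ?thesis using Gm.inv_equality[OF e] by simp
qed

lemma iota_T_comm: "h \<in> H \<Longrightarrow> iota h \<otimes>\<^bsub>Gam\<^esub> Tt = Tt \<otimes>\<^bsub>Gam\<^esub> iota h"
proof -
  assume hH: "h \<in> H"
  have h: "h \<in> carrier G" using hH H subgroup.subset by blast
  have "R `` {[Inr False]} \<otimes>\<^bsub>Gam\<^esub> (iota h \<otimes>\<^bsub>Gam\<^esub> Tt) = R `` {[Inr False, Inl h, Inr True]}"
    using h by (simp add: iota_def Tt_def Gam_mult[OF G.group_axioms] hnn_word_def rangeI)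
  then have "inv\<^bsub>Gam\<^esub> Tt \<otimes>\<^bsub>Gam\<^esub> (iota h \<otimes>\<^bsub>Gam\<^esub> Tt) = R `` {[Inr False, Inl h, Inr True]}"
    by (simp add: Tinv)
  also have "\<dots> = iota h"
    unfolding iota_def using h hH
    by (subst class_eq_iff[OF G.group_axioms]) (auto simp: hnn_word_def intro: hnn_rel.hnn)
  finally have "inv\<^bsub>Gam\<^esub> Tt \<otimes>\<^bsub>Gam\<^esub> (iota h \<otimes>\<^bsub>Gam\<^esub> Tt) = iota h" .
  then have "iota h = inv\<^bsub>Gam\<^esub> Tt \<otimes>\<^bsub>Gam\<^esub> (iota h \<otimes>\<^bsub>Gam\<^esub> Tt)" by simp
  then show ?thesis using Gm.inv_solve_left[of "iota h" Tt "iota h \<otimes>\<^bsub>Gam\<^esub> Tt"] h by simp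
qed

lemma comm_int_pow:
  assumes x: "x \<in> carrier Gam" and y: "y \<in> carrier Gam" and c: "x \<otimes>\<^bsub>Gam\<^esub> y = y \<otimes>\<^bsub>Gam\<^esub> x"
  shows "x [^]\<^bsub>Gam\<^esub> (e::int) \<otimes>\<^bsub>Gam\<^esub> y = y \<otimes>\<^bsub>Gam\<^esub> x [^]\<^bsub>Gam\<^esub> e"
proof (cases e rule: int_cases)
  case (nonneg n)
  then show ?thesis using Gm.group_commutes_pow[OF c x y] by (simp add: int_pow_int)
next
  case (neg n)
  have cn: "x [^]\<^bsub>Gam\<^esub> (Suc n) \<otimes>\<^bsub>Gam\<^esub> y = y \<otimes>\<^bsub>Gam\<^esub> x [^]\<^bsub>Gam\<^esub> (Suc n)"
    using Gm.group_commutes_pow[OF c x y] .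
  have "inv\<^bsub>Gam\<^esub> (x [^]\<^bsub>Gam\<^esub> (Suc n)) \<otimes>\<^bsub>Gam\<^esub> y = y \<otimes>\<^bsub>Gam\<^esub> inv\<^bsub>Gam\<^esub> (x [^]\<^bsub>Gam\<^esub> (Suc n))"
    using Gm.comm_inv[OF _ y cn] x by simp
  moreover have "x [^]\<^bsub>Gam\<^esub> e = inv\<^bsub>Gam\<^esub> (x [^]\<^bsub>Gam\<^esub> (Suc n))"
    using neg Gm.int_pow_neg_int[OF x, of "Suc n"] by simp
  ultimately show ?thesis by simp
qed

end


context hnn_ctx begin

definition Kc :: "'a \<Rightarrow> int \<Rightarrow> ('a + bool) list set" where
  "Kc c a = iota c \<otimes>\<^bsub>Gam\<^esub> Tt [^]\<^bsub>Gam\<^esub> a \<otimes>\<^bsub>Gam\<^esub> inv\<^bsub>Gam\<^esub> (iota c)"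

fun Pl :: "('a \<times> int) list \<Rightarrow> ('a + bool) list set" where
  "Pl [] = \<one>\<^bsub>Gam\<^esub>"
| "Pl (x # l) = Kc (fst x) (snd x) \<otimes>\<^bsub>Gam\<^esub> Pl l"

fun red :: "('a \<times> int) list \<Rightarrow> bool" where
  "red [] = True"
| "red (x # l) = (fst x \<in> carrier G \<and> snd x \<noteq> 0 \<and>
     (case l of [] \<Rightarrow> True | y # _ \<Rightarrow> inv\<^bsub>G\<^esub> (fst x) \<otimes>\<^bsub>G\<^esub> fst y \<notin> H) \<and> red l)"

lemma Kc_closed[simp]: "c \<in> carrier G \<Longrightarrow> Kc c a \<in> carrier Gam"
  by (simp add: Kc_def)

lemma red_carrier: "red l \<Longrightarrow> \<forall>x\<in>set l. fst x \<in> carrier G"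
  by (induction l) auto

lemma Pl_closed: "\<forall>x\<in>set l. fst x \<in> carrier G \<Longrightarrow> Pl l \<in> carrier Gam"
  by (induction l) auto

lemma Kc_shift:
  assumes x: "x \<in> carrier G" and c: "c \<in> carrier G"
  shows "iota x \<otimes>\<^bsub>Gam\<^esub> Kc c a = Kc (x \<otimes>\<^bsub>G\<^esub> c) a \<otimes>\<^bsub>Gam\<^esub> iota x"
  using x c by (simp add: Kc_def iota_mult Gm.inv_mult_group Gm.m_assoc)

lemma Kc_one: "Kc \<one>\<^bsub>G\<^esub> e = Tt [^]\<^bsub>Gam\<^esub> e"
  by (simp add: Kc_def)

lemma Kc_zero: "c \<in> carrier G \<Longrightarrow> Kc c 0 = \<one>\<^bsub>Gam\<^esub>"
  by (simp add: Kc_def)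

lemma Kc_merge:
  assumes c: "c \<in> H"
  shows "Tt [^]\<^bsub>Gam\<^esub> e \<otimes>\<^bsub>Gam\<^esub> Kc c a = Kc c (e + a)"
proof -
  have cG: "c \<in> carrier G" using c H subgroup.subset by blast
  have cm: "Tt \<otimes>\<^bsub>Gam\<^esub> iota c = iota c \<otimes>\<^bsub>Gam\<^esub> Tt" using iota_T_comm[OF c] by simp
  have ce: "Tt [^]\<^bsub>Gam\<^esub> e \<otimes>\<^bsub>Gam\<^esub> iota c = iota c \<otimes>\<^bsub>Gam\<^esub> Tt [^]\<^bsub>Gam\<^esub> e"
    using comm_int_pow[OF Tt_closed iota_closed[OF cG] cm] .
  have "Tt [^]\<^bsub>Gam\<^esub> e \<otimes>\<^bsub>Gam\<^esub> Kc c a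
      = (Tt [^]\<^bsub>Gam\<^esub> e \<otimes>\<^bsub>Gam\<^esub> iota c) \<otimes>\<^bsub>Gam\<^esub> Tt [^]\<^bsub>Gam\<^esub> a \<otimes>\<^bsub>Gam\<^esub> inv\<^bsub>Gam\<^esub> (iota c)"
    using cG by (simp add: Kc_def Gm.m_assoc)
  also have "\<dots> = iota c \<otimes>\<^bsub>Gam\<^esub> (Tt [^]\<^bsub>Gam\<^esub> e \<otimes>\<^bsub>Gam\<^esub> Tt [^]\<^bsub>Gam\<^esub> a) \<otimes>\<^bsub>Gam\<^esub> inv\<^bsub>Gam\<^esub> (iota c)"
    using cG by (simp add: ce Gm.m_assoc)
  also have "\<dots> = Kc c (e + a)"
    by (simp add: Kc_def Gm.int_pow_mult)
  finally show ?thesis .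
qed

lemma Pl_shift:
  assumes x: "x \<in> carrier G" and l: "\<forall>y\<in>set l. fst y \<in> carrier G"
  shows "iota x \<otimes>\<^bsub>Gam\<^esub> Pl l = Pl (map (\<lambda>y. (x \<otimes>\<^bsub>G\<^esub> fst y, snd y)) l) \<otimes>\<^bsub>Gam\<^esub> iota x"
  using l
proof (induction l)
  case Nil then show ?case using x by simp
next
  case (Cons y l)
  have y: "fst y \<in> carrier G" and l: "\<forall>y\<in>set l. fst y \<in> carrier G" using Cons.prems by auto
  have l': "\<forall>z\<in>set (map (\<lambda>y. (x \<otimes>\<^bsub>G\<^esub> fst y, snd y)) l). fst z \<in> carrier G" using l x by auto
  have "iota x \<otimes>\<^bsub>Gam\<^esub> Pl (y # l) = (iota x \<otimes>\<^bsub>Gam\<^esub> Kc (fst y) (snd y)) \<otimes>\<^bsub>Gam\<^esub> Pl l"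
    using x y l by (simp add: Gm.m_assoc Pl_closed)
  also have "\<dots> = Kc (x \<otimes>\<^bsub>G\<^esub> fst y) (snd y) \<otimes>\<^bsub>Gam\<^esub> (iota x \<otimes>\<^bsub>Gam\<^esub> Pl l)"
    using x y l by (simp add: Kc_shift Gm.m_assoc Pl_closed)
  also have "\<dots> = Kc (x \<otimes>\<^bsub>G\<^esub> fst y) (snd y) \<otimes>\<^bsub>Gam\<^esub> (Pl (map (\<lambda>y. (x \<otimes>\<^bsub>G\<^esub> fst y, snd y)) l) \<otimes>\<^bsub>Gam\<^esub> iota x)"
    using Cons.IH[OF l] by simp
  also have "\<dots> = Pl (map (\<lambda>y. (x \<otimes>\<^bsub>G\<^esub> fst y, snd y)) (y # l)) \<otimes>\<^bsub>Gam\<^esub> iota x"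
    using x y l' by (simp add: Gm.m_assoc Pl_closed)
  finally show ?case .
qed

lemma red_shift:
  assumes x: "x \<in> carrier G" and r: "red l"
  shows "red (map (\<lambda>y. (x \<otimes>\<^bsub>G\<^esub> fst y, snd y)) l)"
  using r
proof (induction l)
  case (Cons y l)
  have y: "fst y \<in> carrier G" using Cons.prems by simp
  show ?case
  proof (cases l)
    case Nil then show ?thesis using Cons x y by simp
  next
    case (Cons z l')
    have z: "fst z \<in> carrier G" using Cons.prems \<open>l = z # l'\<close> by auto
    have "inv\<^bsub>G\<^esub> (x \<otimes>\<^bsub>G\<^esub> fst y) \<otimes>\<^bsub>G\<^esub> (x \<otimes>\<^bsub>G\<^esub> fst z) = inv\<^bsub>G\<^esub> (fst y) \<otimes>\<^bsub>G\<^esub> fst z"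
      using x y z by (simp add: G.inv_mult_group G.m_assoc[symmetric]) (simp add: G.m_assoc)
    then show ?thesis using Cons.prems Cons.IH x y \<open>l = z # l'\<close> by auto
  qed
qed simp

lemma push:
  fixes e :: int
  assumes r: "red l" and e: "e \<noteq> 0"
  shows "\<exists>l'. red l' \<and> Tt [^]\<^bsub>Gam\<^esub> e \<otimes>\<^bsub>Gam\<^esub> Pl l = Pl l'"
proof (cases l)
  case Nil
  have "red [(\<one>\<^bsub>G\<^esub>, e)]" using e by simp
  moreover have "Tt [^]\<^bsub>Gam\<^esub> e \<otimes>\<^bsub>Gam\<^esub> Pl l = Pl [(\<one>\<^bsub>G\<^esub>, e)]"
    using Nil by (simp add: Kc_one)
  ultimately show ?thesis by blast
next
  case (Cons y rest)
  have yG: "fst y \<in> carrier G" and rr: "red rest" and ya: "snd y \<noteq> 0" using r Cons by auto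
  have restG: "\<forall>z\<in>set rest. fst z \<in> carrier G" using red_carrier[OF rr] .
  show ?thesis
  proof (cases "fst y \<in> H")
    case True
    have eq: "Tt [^]\<^bsub>Gam\<^esub> e \<otimes>\<^bsub>Gam\<^esub> Pl l = Kc (fst y) (e + snd y) \<otimes>\<^bsub>Gam\<^esub> Pl rest"
      using Cons yG restG by (simp add: Gm.m_assoc[symmetric] Pl_closed Kc_merge[OF True])
    show ?thesis
    proof (cases "e + snd y = 0")
      case True
      then show ?thesis using eq yG restG rr by (intro exI[of _ rest]) (simp add: Kc_zero Pl_closed)
    next
      case False
      have "red ((fst y, e + snd y) # rest)" using False r Cons by (cases rest) auto
      then show ?thesis using eq Cons by (intro exI[of _ "(fst y, e + snd y) # rest"]) auto
    qed
  next
    case False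
    have "red ((\<one>\<^bsub>G\<^esub>, e) # l)" using r e False yG Cons by simp
    moreover have "Tt [^]\<^bsub>Gam\<^esub> e \<otimes>\<^bsub>Gam\<^esub> Pl l = Pl ((\<one>\<^bsub>G\<^esub>, e) # l)" by (simp add: Kc_one)
    ultimately show ?thesis by blast
  qed
qed

lemma normal_form:
  "hnn_word G w \<Longrightarrow> \<exists>l g. red l \<and> g \<in> carrier G \<and> R `` {w} = Pl l \<otimes>\<^bsub>Gam\<^esub> iota g"
proof (induction w)
  case Nil
  then show ?case by (intro exI[of _ "[]"] exI[of _ "\<one>\<^bsub>G\<^esub>"]) (simp add: Gam_one[OF G.group_axioms, symmetric])
next
  case (Cons x w)
  have w: "hnn_word G w" and x: "x \<in> Inl ` carrier G \<union> range Inr"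
    using Cons.prems hnn_word_Cons[OF G.group_axioms] by auto
  obtain l g where lg: "red l" "g \<in> carrier G" "R `` {w} = Pl l \<otimes>\<^bsub>Gam\<^esub> iota g"
    using Cons.IH[OF w] by blast
  have lG: "\<forall>z\<in>set l. fst z \<in> carrier G" using red_carrier[OF lg(1)] .
  have cw: "R `` {x # w} = R `` {[x]} \<otimes>\<^bsub>Gam\<^esub> (Pl l \<otimes>\<^bsub>Gam\<^esub> iota g)"
    using class_Cons[OF Cons.prems] lg(3) by simp
  show ?case
  proof (cases x)
    case (Inl a)
    then have a: "a \<in> carrier G" using x by auto
    have "R `` {x # w} = (iota a \<otimes>\<^bsub>Gam\<^esub> Pl l) \<otimes>\<^bsub>Gam\<^esub> iota g"
      using cw Inl a lg lG by (simp add: iota_def[symmetric] Gm.m_assoc Pl_closed)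
    also have "\<dots> = Pl (map (\<lambda>y. (a \<otimes>\<^bsub>G\<^esub> fst y, snd y)) l) \<otimes>\<^bsub>Gam\<^esub> iota (a \<otimes>\<^bsub>G\<^esub> g)"
      using a lg lG by (simp add: Pl_shift Gm.m_assoc iota_mult Pl_closed red_carrier red_shift)
    finally show ?thesis using red_shift[OF a lg(1)] a lg(2) by blast
  next
    case (Inr b)
    define e :: int where "e = (if b then 1 else -1)"
    have "R `` {[x]} = Tt [^]\<^bsub>Gam\<^esub> e"
      using Inr by (cases b) (simp_all add: e_def Tt_def[symmetric] Tinv Gm.int_pow_neg)
    then have "R `` {x # w} = (Tt [^]\<^bsub>Gam\<^esub> e \<otimes>\<^bsub>Gam\<^esub> Pl l) \<otimes>\<^bsub>Gam\<^esub> iota g"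
      using cw lg lG by (simp add: Gm.m_assoc Pl_closed)
    moreover obtain l' where "red l'" "Tt [^]\<^bsub>Gam\<^esub> e \<otimes>\<^bsub>Gam\<^esub> Pl l = Pl l'"
      using push[OF lg(1), of e] by (cases b) (auto simp: e_def)
    ultimately show ?thesis using lg(2) by auto
  qed
qed

end


lemma bij_by_inverse:
  assumes "ff \<in> extensional S" "ff \<in> S \<rightarrow> S" "gg \<in> S \<rightarrow> S"
    "\<And>x. x \<in> S \<Longrightarrow> ff (gg x) = x" "\<And>x. x \<in> S \<Longrightarrow> gg (ff x) = x"
  shows "ff \<in> Bij S"
  unfolding Bij_def using assms by (auto intro!: bij_betw_byWitness[where f'=gg])

lemma BijGroup_mult: "ff \<in> Bij S \<Longrightarrow> gg \<in> Bij S \<Longrightarrow> ff \<otimes>\<^bsub>BijGroup S\<^esub> gg = compose S ff gg"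
  by (simp add: BijGroup_def)

lemma BijGroup_one: "\<one>\<^bsub>BijGroup S\<^esub> = (\<lambda>x\<in>S. x)"
  by (simp add: BijGroup_def)

locale act = G: group G for G :: "('a, 'b) monoid_scheme" +
  fixes H N :: "'a set" and r :: nat and m :: int and zlab :: "nat \<Rightarrow> 'a set"
  assumes Nn: "N \<lhd> G" and Hs: "subgroup H G" and finC: "finite (rcosets\<^bsub>G\<^esub> N)" and m: "m > 1"
    and zd: "\<And>k. 1 \<le> k \<Longrightarrow> k < r \<Longrightarrow> zlab k \<noteq> zlab (Suc k)"
begin

definition "Cs = rcosets\<^bsub>G\<^esub> N"
definition "V = PiE {..r} (\<lambda>_. {0..<m})"
definition "Om = Cs \<times> V"
definition "lab C = H <#>\<^bsub>G\<^esub> C"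
definition "U y a v = (\<lambda>k\<in>{..r}. if 1 \<le> k \<and> zlab k = y then (v k + a * v (k - 1)) mod m else v k)"
definition "Ua a = (\<lambda>\<omega>\<in>Om. (fst \<omega>, U (lab (fst \<omega>)) a (snd \<omega>)))"
definition "fm x = (\<lambda>\<omega>\<in>Om. (x <#\<^bsub>G\<^esub> fst \<omega>, snd \<omega>))"
abbreviation "Q \<equiv> BijGroup Om"

lemma Ns: "subgroup N G" using Nn normal_imp_subgroup by blast

lemma Cs_sub: "C \<in> Cs \<Longrightarrow> C \<subseteq> carrier G"
  unfolding Cs_def using G.rcosets_part_G[OF Ns] by blast

lemma lc_closed: "C \<in> Cs \<Longrightarrow> x \<in> carrier G \<Longrightarrow> x <#\<^bsub>G\<^esub> C \<in> Cs"
proof -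
  assume C: "C \<in> Cs" and x: "x \<in> carrier G"
  then obtain y where y: "y \<in> carrier G" "C = N #>\<^bsub>G\<^esub> y" by (auto simp: Cs_def RCOSETS_def)
  have NG: "N \<subseteq> carrier G" using Ns subgroup.subset by blast
  have "x <#\<^bsub>G\<^esub> C = ({x} <#>\<^bsub>G\<^esub> N) <#>\<^bsub>G\<^esub> {y}"
    using y x NG by (simp add: l_coset_eq_set_mult r_coset_eq_set_mult G.set_mult_assoc)
  also have "\<dots> = (N #>\<^bsub>G\<^esub> x) #>\<^bsub>G\<^esub> y"
    using normal.coset_eq[OF Nn] x by (simp add: l_coset_eq_set_mult r_coset_eq_set_mult)
  also have "\<dots> = N #>\<^bsub>G\<^esub> (x \<otimes>\<^bsub>G\<^esub> y)" using G.coset_mult_assoc NG x y by simp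
  finally show ?thesis using x y NG by (simp add: Cs_def G.rcosetsI)
qed

lemma lc_assoc: "C \<in> Cs \<Longrightarrow> x \<in> carrier G \<Longrightarrow> y \<in> carrier G \<Longrightarrow> x <#\<^bsub>G\<^esub> (y <#\<^bsub>G\<^esub> C) = (x \<otimes>\<^bsub>G\<^esub> y) <#\<^bsub>G\<^esub> C"
  using G.lcos_m_assoc Cs_sub by blast

lemma lc_one: "C \<in> Cs \<Longrightarrow> \<one>\<^bsub>G\<^esub> <#\<^bsub>G\<^esub> C = C"
  using G.lcos_mult_one Cs_sub by blast

lemma U_in: "v \<in> V \<Longrightarrow> U y a v \<in> V"
  using m by (auto simp: U_def V_def PiE_def Pi_def)

lemma V_range: "v \<in> V \<Longrightarrow> k \<le> r \<Longrightarrow> 0 \<le> v k \<and> v k < m"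
  by (auto simp: V_def PiE_def Pi_def)

lemma U_zero: "v \<in> V \<Longrightarrow> U y 0 v = v"
proof -
  assume v: "v \<in> V"
  show ?thesis
  proof (rule ext)
    fix k show "U y 0 v k = v k"
    proof (cases "k \<le> r")
      case True then show ?thesis using V_range[OF v True] by (simp add: U_def)
    next
      case False then show ?thesis using v by (simp add: U_def V_def PiE_def extensional_def)
    qed
  qed
qed

lemma U_comp: "v \<in> V \<Longrightarrow> U y a (U y b v) = U y (a + b) v"
proof (rule ext)
  fix k assume v: "v \<in> V"
  show "U y a (U y b v) k = U y (a + b) v k"
  proof (cases "k \<le> r \<and> 1 \<le> k \<and> zlab k = y")
    case True
    have k1: "k - 1 \<le> r" using True by linarith
    have prev: "U y b v (k - 1) = v (k - 1)"
    proof (cases "k - 1 \<ge> 1")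
      case True
      moreover have "k - 1 < r" using \<open>k \<le> r \<and> 1 \<le> k \<and> zlab k = y\<close> by linarith
      ultimately have "zlab (k - 1) \<noteq> zlab (Suc (k - 1))" using zd[of "k - 1"] by blast
      then show ?thesis using \<open>k \<le> r \<and> 1 \<le> k \<and> zlab k = y\<close> True k1 by (simp add: U_def)
    next
      case False then show ?thesis using \<open>k \<le> r \<and> 1 \<le> k \<and> zlab k = y\<close> k1 by (simp add: U_def)
    qed
    have "U y a (U y b v) k = (U y b v k + a * v (k - 1)) mod m" using True prev by (simp add: U_def)
    also have "\<dots> = ((v k + b * v (k - 1)) mod m + a * v (k - 1)) mod m" using True by (simp add: U_def)
    also have "\<dots> = (v k + b * v (k - 1) + a * v (k - 1)) mod m" by (rule mod_add_left_eq)
    also have "\<dots> = (v k + (a + b) * v (k - 1)) mod m" by (simp add: algebra_simps)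
    finally show ?thesis using True by (simp add: U_def)
  next
    case False then show ?thesis by (auto simp: U_def)
  qed
qed

lemma Om_fst: "\<omega> \<in> Om \<Longrightarrow> fst \<omega> \<in> Cs" by (auto simp: Om_def)
lemma Om_snd: "\<omega> \<in> Om \<Longrightarrow> snd \<omega> \<in> V" by (auto simp: Om_def)

lemma Ua_out: "\<omega> \<notin> Om \<Longrightarrow> Ua a \<omega> = undefined" by (simp add: Ua_def)
lemma fm_out: "\<omega> \<notin> Om \<Longrightarrow> fm x \<omega> = undefined" by (simp add: fm_def)

lemma Ua_in: "\<omega> \<in> Om \<Longrightarrow> Ua a \<omega> \<in> Om"
  by (auto simp: Ua_def Om_def U_in)

lemma Ua_comp: "\<omega> \<in> Om \<Longrightarrow> Ua a (Ua b \<omega>) = Ua (a + b) \<omega>"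
  using Ua_in by (auto simp: Ua_def Om_def U_in U_comp)

lemma Ua_zero: "\<omega> \<in> Om \<Longrightarrow> Ua 0 \<omega> = \<omega>"
  by (auto simp: Ua_def Om_def U_zero)

lemma Ua_ext: "Ua a \<in> extensional Om" by (simp add: Ua_def)
lemma fm_ext: "fm a \<in> extensional Om" by (simp add: fm_def)

lemma Ua_Bij: "Ua a \<in> Bij Om"
  by (rule bij_by_inverse[where gg="Ua (-a)"]) (auto simp: Ua_ext Ua_in Ua_comp Ua_zero)

lemma fm_in: "\<omega> \<in> Om \<Longrightarrow> x \<in> carrier G \<Longrightarrow> fm x \<omega> \<in> Om"
  by (auto simp: fm_def Om_def lc_closed)

lemma fm_comp: "\<omega> \<in> Om \<Longrightarrow> x \<in> carrier G \<Longrightarrow> y \<in> carrier G \<Longrightarrow> fm x (fm y \<omega>) = fm (x \<otimes>\<^bsub>G\<^esub> y) \<omega>"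
  using fm_in by (auto simp: fm_def Om_def lc_assoc lc_closed)

lemma fm_one: "\<omega> \<in> Om \<Longrightarrow> fm \<one>\<^bsub>G\<^esub> \<omega> = \<omega>"
  by (auto simp: fm_def Om_def lc_one)

lemma fm_Bij: "x \<in> carrier G \<Longrightarrow> fm x \<in> Bij Om"
  by (rule bij_by_inverse[where gg="fm (inv\<^bsub>G\<^esub> x)"]) (auto simp: fm_ext fm_in fm_comp fm_one)

lemma Q_group: "group Q" by (rule group_BijGroup)

lemma fm_hom: "fm \<in> hom G Q"
proof (rule homI)
  fix x assume "x \<in> carrier G" then show "fm x \<in> carrier Q" by (simp add: BijGroup_def fm_Bij)
next
  fix x y assume x: "x \<in> carrier G" and y: "y \<in> carrier G"
  show "fm (x \<otimes>\<^bsub>G\<^esub> y) = fm x \<otimes>\<^bsub>Q\<^esub> fm y"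
    using x y by (simp add: BijGroup_mult fm_Bij) (rule ext, auto simp: compose_def fm_comp fm_out)
qed

lemma Ua_mult: "Ua a \<otimes>\<^bsub>Q\<^esub> Ua b = Ua (a + b)"
  by (simp add: BijGroup_mult Ua_Bij) (rule ext, auto simp: compose_def Ua_comp Ua_out)

lemma Ua_one: "Ua 0 = \<one>\<^bsub>Q\<^esub>"
  by (simp add: BijGroup_one) (rule ext, auto simp: Ua_zero Ua_out)

lemma Ua_carrier: "Ua a \<in> carrier Q" by (simp add: BijGroup_def Ua_Bij)

lemma Ua_pow: "Ua 1 [^]\<^bsub>Q\<^esub> (a::int) = Ua a"
proof -
  have nat: "Ua 1 [^]\<^bsub>Q\<^esub> (n::nat) = Ua (int n)" for n
    by (induction n) (simp_all add: Ua_one Ua_mult add.commute)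
  show ?thesis
  proof (cases a rule: int_cases)
    case (nonneg n) then show ?thesis using nat by (simp add: int_pow_int)
  next
    case (neg n)
    have "Ua (- int (Suc n)) \<otimes>\<^bsub>Q\<^esub> Ua (int (Suc n)) = \<one>\<^bsub>Q\<^esub>" by (simp add: Ua_mult Ua_one)
    then have "inv\<^bsub>Q\<^esub> (Ua (int (Suc n))) = Ua (- int (Suc n))"
      using group.inv_equality[OF Q_group] Ua_carrier by blast
    moreover have "Ua 1 [^]\<^bsub>Q\<^esub> a = inv\<^bsub>Q\<^esub> (Ua 1 [^]\<^bsub>Q\<^esub> (Suc n))"
      unfolding neg by (rule group.int_pow_neg_int[OF Q_group Ua_carrier])
    ultimately show ?thesis using neg by (simp only: nat)
  qed
qed

lemma lab_l: "C \<in> Cs \<Longrightarrow> h \<in> H \<Longrightarrow> lab (h <#\<^bsub>G\<^esub> C) = lab C"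
proof -
  assume C: "C \<in> Cs" and h: "h \<in> H"
  have hG: "h \<in> carrier G" using h Hs subgroup.subset by blast
  have HG: "H \<subseteq> carrier G" using Hs subgroup.subset by blast
  have "H <#>\<^bsub>G\<^esub> (h <#\<^bsub>G\<^esub> C) = (H #>\<^bsub>G\<^esub> h) <#>\<^bsub>G\<^esub> C"
    using G.rcos_assoc_lcos[OF HG Cs_sub[OF C] hG] by simp
  also have "H #>\<^bsub>G\<^esub> h = H" using subgroup.rcos_const[OF Hs G.group_axioms h] .
  finally show ?thesis by (simp add: lab_def)
qed

lemma comm: "h \<in> H \<Longrightarrow> h \<in> carrier G \<Longrightarrow> fm h \<otimes>\<^bsub>Q\<^esub> Ua 1 = Ua 1 \<otimes>\<^bsub>Q\<^esub> fm h"
  by (simp add: BijGroup_mult fm_Bij Ua_Bij)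
     (rule ext, auto simp: compose_def Ua_in fm_in Ua_def fm_def lab_l Om_def lc_closed U_in)

lemma univ: "hnn_univ G Q H fm (Ua 1)"
  unfolding hnn_univ_def hnn_univ_axioms_def using G.group_axioms Q_group fm_hom Ua_carrier comm by blast

end


lemma mod_diff_eq_imp_eq:
  fixes a b c m :: int
  assumes "0 \<le> a" "a < m" "0 \<le> b" "b < m" "(a - c) mod m = (b - c) mod m"
  shows "a = b"
proof -
  have "(a - c + c) mod m = (b - c + c) mod m"
    using assms(5) by (metis mod_add_left_eq)
  then show ?thesis using assms by simp
qed

lemma BijGroup_carrier: "carrier (BijGroup S) = Bij S" by (simp add: BijGroup_def)

context act begin

definition "tri Xf \<longleftrightarrow> (\<forall>C v v' k. C \<in> Cs \<longrightarrow> v \<in> V \<longrightarrow> v' \<in> V \<longrightarrow> k \<le> r \<longrightarrow> (\<forall>i<k. v i = v' i) \<longrightarrow>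
   (snd (Xf (C, v)) k - v k) mod m = (snd (Xf (C, v')) k - v' k) mod m)"

lemma triD: "tri Xf \<Longrightarrow> C \<in> Cs \<Longrightarrow> v \<in> V \<Longrightarrow> v' \<in> V \<Longrightarrow> k \<le> r \<Longrightarrow> (\<forall>i<k. v i = v' i) \<Longrightarrow>
   (snd (Xf (C, v)) k - v k) mod m = (snd (Xf (C, v')) k - v' k) mod m"
  unfolding tri_def by blast

definition "good Xf x \<longleftrightarrow> Xf \<in> Bij Om \<and> x \<in> carrier G \<and> (\<forall>\<omega>\<in>Om. fst (Xf \<omega>) = x <#\<^bsub>G\<^esub> fst \<omega>) \<and> tri Xf"

lemma Bij_in: "Xf \<in> Bij Om \<Longrightarrow> \<omega> \<in> Om \<Longrightarrow> Xf \<omega> \<in> Om"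
  using Bij_imp_funcset by blast

lemma tri_low:
  assumes Xf: "Xf \<in> Bij Om" and t: "tri Xf" and C: "C \<in> Cs" and v: "v \<in> V" and v': "v' \<in> V"
    and fs: "fst (Xf (C, v)) = fst (Xf (C, v'))"
  shows "(\<forall>i<k. v i = v' i) \<Longrightarrow> (\<forall>i<k. snd (Xf (C, v)) i = snd (Xf (C, v')) i)"
proof (induction k)
  case (Suc k)
  then have IH: "\<forall>i<k. snd (Xf (C, v)) i = snd (Xf (C, v')) i" by simp
  have "Xf (C, v) \<in> Om" "Xf (C, v') \<in> Om" using Bij_in[OF Xf] C v v' by (simp_all add: Om_def)
  then have w: "snd (Xf (C, v)) \<in> V" "snd (Xf (C, v')) \<in> V" using Om_snd by blast+
  show ?case
  proof (intro allI impI)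
    fix i assume "i < Suc k"
    show "snd (Xf (C, v)) i = snd (Xf (C, v')) i"
    proof (cases "i < k")
      case True then show ?thesis using IH by blast
    next
      case False
      then have ik: "i = k" using \<open>i < Suc k\<close> by simp
      show ?thesis
      proof (cases "k \<le> r")
        case True
        have "(snd (Xf (C, v)) k - v k) mod m = (snd (Xf (C, v')) k - v' k) mod m"
          using triD[OF t C v v' True] Suc.prems by simp
        moreover have "v k = v' k" using Suc.prems by simp
        ultimately show ?thesis using ik mod_diff_eq_imp_eq V_range[OF w(1) True] V_range[OF w(2) True] by metis
      next
        case False
        then show ?thesis using w ik by (auto simp: V_def PiE_def extensional_def)
      qed
    qed
  qed
qed simp

lemma good_comp:
  assumes Xf: "good Xf x" and Yf: "good Yf y"
  shows "good (Xf \<otimes>\<^bsub>Q\<^esub> Yf) (x \<otimes>\<^bsub>G\<^esub> y)"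
proof -
  have XB: "Xf \<in> Bij Om" and YB: "Yf \<in> Bij Om" and x: "x \<in> carrier G" and y: "y \<in> carrier G"
    and Xf: "\<forall>\<omega>\<in>Om. fst (Xf \<omega>) = x <#\<^bsub>G\<^esub> fst \<omega>" and Yf: "\<forall>\<omega>\<in>Om. fst (Yf \<omega>) = y <#\<^bsub>G\<^esub> fst \<omega>"
    and Xt: "tri Xf" and Yt: "tri Yf" using Xf Yf by (auto simp: good_def)
  have eq: "Xf \<otimes>\<^bsub>Q\<^esub> Yf = compose Om Xf Yf" using XB YB by (simp add: BijGroup_mult)
  have B: "compose Om Xf Yf \<in> Bij Om" using XB YB compose_Bij by blast
  have F: "\<forall>\<omega>\<in>Om. fst (compose Om Xf Yf \<omega>) = (x \<otimes>\<^bsub>G\<^esub> y) <#\<^bsub>G\<^esub> fst \<omega>"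
    using Xf Yf Bij_in[OF YB] x y lc_assoc Om_fst by (auto simp: compose_def)
  have T: "tri (compose Om Xf Yf)"
    unfolding tri_def
  proof (intro allI impI)
    fix C v v' k assume C: "C \<in> Cs" and v: "v \<in> V" and v': "v' \<in> V" and k: "k \<le> r" and agree: "\<forall>i<k. v i = v' i"
    define w where "w = snd (Yf (C, v))"
    define w' where "w' = snd (Yf (C, v'))"
    have o1: "(C, v) \<in> Om" "(C, v') \<in> Om" using C v v' by (auto simp: Om_def)
    have fy: "fst (Yf (C, v)) = y <#\<^bsub>G\<^esub> C" "fst (Yf (C, v')) = y <#\<^bsub>G\<^esub> C" using Yf o1 by auto
    have Yeq: "Yf (C, v) = (y <#\<^bsub>G\<^esub> C, w)" "Yf (C, v') = (y <#\<^bsub>G\<^esub> C, w')"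
      using fy by (auto simp: w_def w'_def prod_eq_iff)
    have yC: "y <#\<^bsub>G\<^esub> C \<in> Cs" using lc_closed[OF C y] .
    have wV: "w \<in> V" "w' \<in> V" using Bij_in[OF YB o1(1)] Bij_in[OF YB o1(2)] Yeq by (auto simp: Om_def)
    have wa: "\<forall>i<k. w i = w' i" using tri_low[OF YB Yt C v v', of k] fy agree by (simp add: w_def w'_def)
    have d1: "(snd (Xf (y <#\<^bsub>G\<^esub> C, w)) k - w k) mod m = (snd (Xf (y <#\<^bsub>G\<^esub> C, w')) k - w' k) mod m"
      using triD[OF Xt yC wV k wa] .
    have d2: "(w k - v k) mod m = (w' k - v' k) mod m"
      using triD[OF Yt C v v' k agree] by (simp add: w_def w'_def)
    have "(snd (Xf (y <#\<^bsub>G\<^esub> C, w)) k - v k) mod m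
        = ((snd (Xf (y <#\<^bsub>G\<^esub> C, w)) k - w k) mod m + (w k - v k) mod m) mod m"
      by (simp add: mod_add_eq)
    also have "\<dots> = ((snd (Xf (y <#\<^bsub>G\<^esub> C, w')) k - w' k) mod m + (w' k - v' k) mod m) mod m"
      using d1 d2 by simp
    also have "\<dots> = (snd (Xf (y <#\<^bsub>G\<^esub> C, w')) k - v' k) mod m"
      by (simp add: mod_add_eq)
    finally show "(snd (compose Om Xf Yf (C, v)) k - v k) mod m = (snd (compose Om Xf Yf (C, v')) k - v' k) mod m"
      using o1 Yeq by (simp add: compose_def)
  qed
  show ?thesis using eq B F T x y by (simp add: good_def)
qed

lemma good_one: "good \<one>\<^bsub>Q\<^esub> \<one>\<^bsub>G\<^esub>"
  by (auto simp: good_def BijGroup_one id_Bij lc_one Om_def tri_def)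

lemma good_fm: "x \<in> carrier G \<Longrightarrow> good (fm x) x"
proof -
  assume x: "x \<in> carrier G"
  have "fm x \<in> Bij Om" using fm_Bij[OF x] .
  moreover have "\<forall>\<omega>\<in>Om. fst (fm x \<omega>) = x <#\<^bsub>G\<^esub> fst \<omega>" by (simp add: fm_def)
  moreover have "tri (fm x)" by (auto simp: tri_def fm_def Om_def)
  ultimately show ?thesis using x by (simp add: good_def)
qed

lemma good_Ua: "good (Ua a) \<one>\<^bsub>G\<^esub>"
proof -
  have "tri (Ua a)"
    unfolding tri_def
  proof (intro allI impI)
    fix C v v' k assume C: "C \<in> Cs" and v: "v \<in> V" and v': "v' \<in> V" and k: "k \<le> r" and agree: "\<forall>i<k. v i = v' i"
    have o1: "(C, v) \<in> Om" "(C, v') \<in> Om" using C v v' by (auto simp: Om_def)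
    show "(snd (Ua a (C, v)) k - v k) mod m = (snd (Ua a (C, v')) k - v' k) mod m"
    proof (cases "1 \<le> k \<and> zlab k = lab C")
      case True
      have "v (k - 1) = v' (k - 1)" using agree True by simp
      moreover have "(snd (Ua a (C, v)) k - v k) mod m = (a * v (k - 1)) mod m"
        using o1 True k by (simp add: Ua_def U_def mod_diff_left_eq)
      moreover have "(snd (Ua a (C, v')) k - v' k) mod m = (a * v' (k - 1)) mod m"
        using o1 True k by (simp add: Ua_def U_def mod_diff_left_eq)
      ultimately show ?thesis by simp
    next
      case False
      then show ?thesis using o1 k by (auto simp: Ua_def U_def)
    qed
  qed
  moreover have "Ua a \<in> Bij Om" by (rule Ua_Bij)
  moreover have "\<forall>\<omega>\<in>Om. fst (Ua a \<omega>) = \<one>\<^bsub>G\<^esub> <#\<^bsub>G\<^esub> fst \<omega>" by (simp add: Ua_def lc_one Om_fst)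
  ultimately show ?thesis by (simp add: good_def)
qed

lemma good_pow: "good Xf x \<Longrightarrow> good (Xf [^]\<^bsub>Q\<^esub> (n::nat)) (x [^]\<^bsub>G\<^esub> n)"
proof (induction n)
  case 0 then show ?case using good_one by simp
next
  case (Suc n)
  then show ?case using good_comp[OF Suc.IH[OF Suc.prems] Suc.prems] by simp
qed

lemma good_Bij: "good Xf x \<Longrightarrow> Xf \<in> Bij Om" by (simp add: good_def)

lemma Q_pow_Suc: "Xf \<in> Bij Om \<Longrightarrow> \<omega> \<in> Om \<Longrightarrow> (Xf [^]\<^bsub>Q\<^esub> (Suc n)) \<omega> = (Xf [^]\<^bsub>Q\<^esub> n) (Xf \<omega>)"
proof -
  assume Xf: "Xf \<in> Bij Om" and w: "\<omega> \<in> Om"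
  have "Xf \<in> carrier Q" using Xf by (simp only: BijGroup_carrier)
  then have "Xf [^]\<^bsub>Q\<^esub> n \<in> carrier Q" by (rule monoid.nat_pow_closed[OF group.is_monoid[OF Q_group]])
  then have XB: "Xf [^]\<^bsub>Q\<^esub> n \<in> Bij Om" by (simp only: BijGroup_carrier)
  have "Xf [^]\<^bsub>Q\<^esub> (Suc n) = Xf [^]\<^bsub>Q\<^esub> n \<otimes>\<^bsub>Q\<^esub> Xf" by (rule monoid.nat_pow_Suc[OF group.is_monoid[OF Q_group]])
  also have "\<dots> = compose Om (Xf [^]\<^bsub>Q\<^esub> n) Xf" using XB Xf by (rule BijGroup_mult)
  finally show ?thesis using w by (simp add: compose_def)
qed

definition "fixb j Zf \<longleftrightarrow> (\<forall>\<omega>\<in>Om. fst (Zf \<omega>) = fst \<omega> \<and> (\<forall>i<j. snd (Zf \<omega>) i = snd \<omega> i))"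

lemma fixb_pow:
  assumes Zf: "good Zf z" and f: "fixb j Zf"
  shows "fixb j (Zf [^]\<^bsub>Q\<^esub> (n::nat))"
proof (induction n)
  case 0 then show ?case by (simp add: fixb_def BijGroup_one)
next
  case (Suc n)
  have ZB: "Zf \<in> Bij Om" using Zf good_Bij by blast
  show ?case unfolding fixb_def
  proof
    fix \<omega> assume w: "\<omega> \<in> Om"
    have "Zf \<omega> \<in> Om" using Bij_in[OF ZB w] .
    then show "fst ((Zf [^]\<^bsub>Q\<^esub> Suc n) \<omega>) = fst \<omega> \<and> (\<forall>i<j. snd ((Zf [^]\<^bsub>Q\<^esub> Suc n) \<omega>) i = snd \<omega> i)"
      using Suc.IH f w Q_pow_Suc[OF ZB w, of n] by (simp add: fixb_def)
  qed
qed

lemma fixb_step: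
  assumes Zf: "good Zf z" and f: "fixb j Zf" and j: "j \<le> r"
  shows "fixb (Suc j) (Zf [^]\<^bsub>Q\<^esub> (nat m))"
proof -
  have ZB: "Zf \<in> Bij Om" and Zt: "tri Zf" using Zf by (auto simp: good_def)
  have key: "\<forall>\<omega>\<in>Om. (snd ((Zf [^]\<^bsub>Q\<^esub> n) \<omega>) j - snd \<omega> j) mod m = (int n * (snd (Zf \<omega>) j - snd \<omega> j)) mod m"
    for n :: nat
  proof (induction n)
    case 0 then show ?case by (simp add: BijGroup_one)
  next
    case (Suc n)
    show ?case
    proof
      fix \<omega> assume w: "\<omega> \<in> Om"
      obtain C v where Cv: "\<omega> = (C, v)" "C \<in> Cs" "v \<in> V" using w by (auto simp: Om_def)
      have Zw: "Zf \<omega> \<in> Om" using Bij_in[OF ZB w] .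
      define v1 where "v1 = snd (Zf \<omega>)"
      have "fst (Zf \<omega>) = C" "\<forall>i<j. v1 i = v i" using f w Cv by (auto simp: fixb_def v1_def)
      then have v1: "Zf \<omega> = (C, v1)" "v1 \<in> V" "\<forall>i<j. v1 i = v i"
        using Om_snd[OF Zw] by (auto simp: v1_def prod_eq_iff)
      have dd: "(snd (Zf (C, v1)) j - v1 j) mod m = (snd (Zf (C, v)) j - v j) mod m"
        using triD[OF Zt Cv(2) v1(2) Cv(3) j] v1(3) by simp
      have "(snd ((Zf [^]\<^bsub>Q\<^esub> Suc n) \<omega>) j - snd \<omega> j) mod m
          = ((snd ((Zf [^]\<^bsub>Q\<^esub> n) (Zf \<omega>)) j - snd (Zf \<omega>) j) + (snd (Zf \<omega>) j - snd \<omega> j)) mod m"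
        using Q_pow_Suc[OF ZB w] by simp
      also have "\<dots> = ((snd ((Zf [^]\<^bsub>Q\<^esub> n) (Zf \<omega>)) j - snd (Zf \<omega>) j) mod m + (snd (Zf \<omega>) j - snd \<omega> j)) mod m"
        by (simp add: mod_add_left_eq)
      also have "\<dots> = ((int n * (snd (Zf (Zf \<omega>)) j - snd (Zf \<omega>) j)) mod m + (snd (Zf \<omega>) j - snd \<omega> j)) mod m"
        using Suc.IH Zw by simp
      also have "\<dots> = ((int n * (snd (Zf \<omega>) j - snd \<omega> j)) mod m + (snd (Zf \<omega>) j - snd \<omega> j)) mod m"
      proof -
        have d10: "(snd (Zf (Zf \<omega>)) j - snd (Zf \<omega>) j) mod m = (snd (Zf \<omega>) j - snd \<omega> j) mod m"
          using dd v1(1) Cv(1) by simp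
        have "(int n * (snd (Zf (Zf \<omega>)) j - snd (Zf \<omega>) j)) mod m = (int n * (snd (Zf \<omega>) j - snd \<omega> j)) mod m"
          by (metis mod_mult_right_eq d10)
        then show ?thesis by (simp only:)
      qed
      also have "\<dots> = (int n * (snd (Zf \<omega>) j - snd \<omega> j) + (snd (Zf \<omega>) j - snd \<omega> j)) mod m"
        by (rule mod_add_left_eq)
      also have "\<dots> = (int (Suc n) * (snd (Zf \<omega>) j - snd \<omega> j)) mod m"
        by (simp add: algebra_simps)
      finally show "(snd ((Zf [^]\<^bsub>Q\<^esub> Suc n) \<omega>) j - snd \<omega> j) mod m = (int (Suc n) * (snd (Zf \<omega>) j - snd \<omega> j)) mod m" .
    qed
  qed
  have fp: "fixb j (Zf [^]\<^bsub>Q\<^esub> nat m)" using fixb_pow[OF Zf f] .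
  show ?thesis unfolding fixb_def
  proof
    fix \<omega> assume w: "\<omega> \<in> Om"
    have W: "(Zf [^]\<^bsub>Q\<^esub> nat m) \<omega> \<in> Om"
      using Bij_in[OF good_Bij[OF good_pow[OF Zf]] w] .
    have "(snd ((Zf [^]\<^bsub>Q\<^esub> nat m) \<omega>) j - snd \<omega> j) mod m = 0"
      using key[of "nat m"] w m by simp
    moreover have "0 \<le> snd ((Zf [^]\<^bsub>Q\<^esub> nat m) \<omega>) j \<and> snd ((Zf [^]\<^bsub>Q\<^esub> nat m) \<omega>) j < m"
      using V_range[OF Om_snd[OF W] j] .
    moreover have "0 \<le> snd \<omega> j \<and> snd \<omega> j < m" using V_range[OF Om_snd[OF w] j] .
    ultimately have "snd ((Zf [^]\<^bsub>Q\<^esub> nat m) \<omega>) j = snd \<omega> j"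
      using mod_diff_eq_imp_eq[of "snd ((Zf [^]\<^bsub>Q\<^esub> nat m) \<omega>) j" m "snd \<omega> j" "snd \<omega> j"] by simp
    then show "fst ((Zf [^]\<^bsub>Q\<^esub> nat m) \<omega>) = fst \<omega> \<and> (\<forall>i<Suc j. snd ((Zf [^]\<^bsub>Q\<^esub> nat m) \<omega>) i = snd \<omega> i)"
      using fp w by (auto simp: fixb_def less_Suc_eq)
  qed
qed

end


context act begin

lemma pow_idx_in_N: "x \<in> carrier G \<Longrightarrow> x [^]\<^bsub>G\<^esub> card Cs \<in> N"
proof -
  assume x: "x \<in> carrier G"
  have gF: "group (G Mod N)" using normal.factorgroup_is_group[OF Nn] .
  have xc: "N #>\<^bsub>G\<^esub> x \<in> carrier (G Mod N)" using x by (simp add: FactGroup_def RCOSETS_def) blast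
  have "(N #>\<^bsub>G\<^esub> x) [^]\<^bsub>G Mod N\<^esub> order (G Mod N) = \<one>\<^bsub>G Mod N\<^esub>"
    using group.pow_order_eq_1[OF gF xc] .
  moreover have "order (G Mod N) = card Cs" by (simp add: order_def FactGroup_def Cs_def)
  ultimately have "N #>\<^bsub>G\<^esub> (x [^]\<^bsub>G\<^esub> card Cs) = N"
    using normal.FactGroup_pow[OF Nn x] by simp
  then show ?thesis using G.coset_join1[OF _ _ Ns] x by simp
qed

lemma lc_N: "C \<in> Cs \<Longrightarrow> x \<in> N \<Longrightarrow> x <#\<^bsub>G\<^esub> C = C"
proof -
  assume C: "C \<in> Cs" and xN: "x \<in> N"
  have NG: "N \<subseteq> carrier G" using Ns subgroup.subset by blast
  have x: "x \<in> carrier G" using xN NG by blast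
  obtain y where y: "y \<in> carrier G" "C = N #>\<^bsub>G\<^esub> y" using C by (auto simp: Cs_def RCOSETS_def)
  have "x <#\<^bsub>G\<^esub> C = ({x} <#>\<^bsub>G\<^esub> N) <#>\<^bsub>G\<^esub> {y}"
    using y x NG by (simp add: l_coset_eq_set_mult r_coset_eq_set_mult G.set_mult_assoc)
  also have "\<dots> = (x <#\<^bsub>G\<^esub> N) #>\<^bsub>G\<^esub> y" by (simp add: l_coset_eq_set_mult r_coset_eq_set_mult)
  also have "x <#\<^bsub>G\<^esub> N = N" using G.coset_join3[OF x Ns xN] .
  finally show ?thesis using y by simp
qed

lemma fixb_full: "Wf \<in> Bij Om \<Longrightarrow> fixb (Suc r) Wf \<Longrightarrow> Wf = \<one>\<^bsub>Q\<^esub>"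
proof -
  assume W: "Wf \<in> Bij Om" and f: "fixb (Suc r) Wf"
  show ?thesis
  proof (rule ext)
    fix \<omega>
    show "Wf \<omega> = \<one>\<^bsub>Q\<^esub> \<omega>"
    proof (cases "\<omega> \<in> Om")
      case True
      have W1: "Wf \<omega> \<in> Om" using Bij_in[OF W True] .
      have s: "snd (Wf \<omega>) = snd \<omega>"
      proof (rule ext)
        fix i show "snd (Wf \<omega>) i = snd \<omega> i"
        proof (cases "i \<le> r")
          case True then show ?thesis using f \<open>\<omega> \<in> Om\<close> by (auto simp: fixb_def)
        next
          case False then show ?thesis using Om_snd[OF W1] Om_snd[OF \<open>\<omega> \<in> Om\<close>]
            by (auto simp: V_def PiE_def extensional_def)
        qed
      qed
      have "fst (Wf \<omega>) = fst \<omega>" using f True by (auto simp: fixb_def)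
      then show ?thesis using s True by (simp add: BijGroup_one prod_eq_iff)
    next
      case False
      then show ?thesis using W by (cases \<omega>) (auto simp: BijGroup_one Bij_def extensional_def)
    qed
  qed
qed

lemma good_exp: "good Xf x \<Longrightarrow> Xf [^]\<^bsub>Q\<^esub> (card Cs * nat m ^ Suc r) = \<one>\<^bsub>Q\<^esub>"
proof -
  assume X: "good Xf x"
  define Yf where "Yf = Xf [^]\<^bsub>Q\<^esub> card Cs"
  have xG: "x \<in> carrier G" using X by (simp add: good_def)
  have Yg: "good Yf (x [^]\<^bsub>G\<^esub> card Cs)" using good_pow[OF X] by (simp add: Yf_def)
  have xN: "x [^]\<^bsub>G\<^esub> card Cs \<in> N" using pow_idx_in_N[OF xG] .
  have f0: "fixb 0 Yf" using Yg xN lc_N Om_fst by (auto simp: fixb_def good_def)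
  have XQ: "Xf \<in> carrier Q" using X by (simp add: good_def BijGroup_carrier)
  have YQ: "Yf \<in> carrier Q" using Yg by (simp add: good_def BijGroup_carrier)
  have h: "j \<le> Suc r \<Longrightarrow> fixb j (Yf [^]\<^bsub>Q\<^esub> (nat m ^ j))" for j
  proof (induction j)
    case 0 then show ?case using f0 monoid.nat_pow_eone[OF group.is_monoid[OF Q_group] YQ] by simp
  next
    case (Suc j)
    have IH: "fixb j (Yf [^]\<^bsub>Q\<^esub> (nat m ^ j))" using Suc by simp
    have gZ: "good (Yf [^]\<^bsub>Q\<^esub> (nat m ^ j)) ((x [^]\<^bsub>G\<^esub> card Cs) [^]\<^bsub>G\<^esub> (nat m ^ j))"
      using good_pow[OF Yg] .
    have "fixb (Suc j) ((Yf [^]\<^bsub>Q\<^esub> (nat m ^ j)) [^]\<^bsub>Q\<^esub> nat m)"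
      using fixb_step[OF gZ IH] Suc.prems by simp
    then show ?case
      using monoid.nat_pow_pow[OF group.is_monoid[OF Q_group] YQ, of "nat m ^ j" "nat m"]
      by (simp add: mult.commute)
  qed
  have "fixb (Suc r) (Yf [^]\<^bsub>Q\<^esub> (nat m ^ Suc r))" using h[OF le_refl] .
  moreover have "Yf [^]\<^bsub>Q\<^esub> (nat m ^ Suc r) \<in> Bij Om"
    using good_Bij[OF good_pow[OF Yg]] .
  ultimately have "Yf [^]\<^bsub>Q\<^esub> (nat m ^ Suc r) = \<one>\<^bsub>Q\<^esub>" using fixb_full by blast
  then show ?thesis
    using monoid.nat_pow_pow[OF group.is_monoid[OF Q_group] XQ, of "card Cs" "nat m ^ Suc r"]
    by (simp add: Yf_def)
qed

lemma finite_Om: "finite Om"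
  using finC by (simp add: Om_def Cs_def V_def finite_PiE)

lemma finite_Q: "finite (carrier Q)"
proof -
  have "carrier Q \<subseteq> PiE Om (\<lambda>_. Om)"
    by (auto simp: BijGroup_carrier Bij_def PiE_def bij_betw_def)
  then show ?thesis using finite_PiE[OF finite_Om, of "\<lambda>_. Om"] finite_Om finite_subset by blast
qed

end


sublocale act \<subseteq> hc: hnn_ctx G H
  by (intro hnn_ctx.intro hnn_ctx_axioms.intro G.group_axioms Hs)

sublocale act \<subseteq> hu: hnn_univ G "BijGroup Om" H fm "Ua 1"
  by (rule univ)

context act begin

abbreviation "Ph \<equiv> Phi Q fm (Ua 1)"

lemma Ph_hom: "Ph \<in> hom (HNN_trivial G H) Q" by (rule hu.Phi_hom)

lemma Ph_gh: "group_hom (HNN_trivial G H) Q Ph"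
  using Ph_hom hc.Gm.group_axioms Q_group by (simp add: group_hom_def group_hom_axioms_def)

lemma Ph_iota: "c \<in> carrier G \<Longrightarrow> Ph (hc.iota c) = fm c"
  by (simp add: hc.iota_def hu.Phi_class hc.word_letter_Inl hu.evw_single evl_def)

lemma Ph_T: "Ph hc.Tt = Ua 1"
  by (simp add: hc.Tt_def hu.Phi_class hc.word_letter_Inr hu.evw_single evl_def)

lemma Ph_Kc: "c \<in> carrier G \<Longrightarrow> Ph (hc.Kc c a) = fm c \<otimes>\<^bsub>Q\<^esub> Ua a \<otimes>\<^bsub>Q\<^esub> fm (inv\<^bsub>G\<^esub> c)"
proof -
  assume c: "c \<in> carrier G"
  have "Ph (hc.Kc c a) = Ph (hc.iota c) \<otimes>\<^bsub>Q\<^esub> Ph (hc.Tt [^]\<^bsub>HNN_trivial G H\<^esub> a) \<otimes>\<^bsub>Q\<^esub> Ph (inv\<^bsub>HNN_trivial G H\<^esub> hc.iota c)"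
    using c by (simp add: hc.Kc_def group_hom.hom_mult[OF Ph_gh])
  also have "\<dots> = fm c \<otimes>\<^bsub>Q\<^esub> Ua a \<otimes>\<^bsub>Q\<^esub> fm (inv\<^bsub>G\<^esub> c)"
    using c by (simp add: group_hom.hom_int_pow[OF Ph_gh] Ph_T Ua_pow Ph_iota hc.iota_inv[symmetric])
  finally show ?thesis .
qed

lemma Ph_Kc_act:
  assumes c: "c \<in> carrier G" and C: "C \<in> Cs" and v: "v \<in> V"
  shows "Ph (hc.Kc c a) (C, v) = (C, U (lab (inv\<^bsub>G\<^esub> c <#\<^bsub>G\<^esub> C)) a v)"
proof -
  have ic: "inv\<^bsub>G\<^esub> c \<in> carrier G" using c by simp
  have o: "(C, v) \<in> Om" using C v by (simp add: Om_def)
  have o2: "(inv\<^bsub>G\<^esub> c <#\<^bsub>G\<^esub> C, v) \<in> Om" using lc_closed[OF C ic] v by (simp add: Om_def)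
  have o3: "(inv\<^bsub>G\<^esub> c <#\<^bsub>G\<^esub> C, U (lab (inv\<^bsub>G\<^esub> c <#\<^bsub>G\<^esub> C)) a v) \<in> Om"
    using lc_closed[OF C ic] U_in[OF v] by (simp add: Om_def)
  have eq: "fm c \<otimes>\<^bsub>Q\<^esub> Ua a \<otimes>\<^bsub>Q\<^esub> fm (inv\<^bsub>G\<^esub> c) = compose Om (compose Om (fm c) (Ua a)) (fm (inv\<^bsub>G\<^esub> c))"
    using c ic by (simp add: BijGroup_mult fm_Bij Ua_Bij compose_Bij)
  have "c <#\<^bsub>G\<^esub> (inv\<^bsub>G\<^esub> c <#\<^bsub>G\<^esub> C) = C" using c ic C by (simp add: lc_assoc lc_one)
  moreover have "Ph (hc.Kc c a) (C, v) = fm c (Ua a (fm (inv\<^bsub>G\<^esub> c) (C, v)))"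
    using o o2 fm_in[OF o ic] Ua_in by (simp add: Ph_Kc[OF c] eq compose_def)
  ultimately show ?thesis using o o2 o3 c
    by (simp add: fm_def Ua_def)
qed

lemma Ph_Pl_fst:
  "\<forall>y\<in>set l. fst y \<in> carrier G \<Longrightarrow> \<omega> \<in> Om \<Longrightarrow> Ph (hc.Pl l) \<omega> \<in> Om \<and> fst (Ph (hc.Pl l) \<omega>) = fst \<omega>"
proof (induction l arbitrary: \<omega>)
  case Nil
  then show ?case using group_hom.hom_one[OF Ph_gh] by (simp add: BijGroup_one)
next
  case (Cons y l)
  have y: "fst y \<in> carrier G" and l: "\<forall>y\<in>set l. fst y \<in> carrier G" using Cons.prems by auto
  have B1: "Ph (hc.Kc (fst y) (snd y)) \<in> Bij Om"
    using hom_in_carrier[OF Ph_hom hc.Kc_closed[OF y]] by (simp add: BijGroup_carrier)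
  have B2: "Ph (hc.Pl l) \<in> Bij Om"
    using hom_in_carrier[OF Ph_hom hc.Pl_closed[OF l]] by (simp add: BijGroup_carrier)
  have e: "Ph (hc.Pl (y # l)) = compose Om (Ph (hc.Kc (fst y) (snd y))) (Ph (hc.Pl l))"
    using y l B1 B2 by (simp add: group_hom.hom_mult[OF Ph_gh] hc.Pl_closed BijGroup_mult)
  obtain C v where Cv: "Ph (hc.Pl l) \<omega> = (C, v)" "C \<in> Cs" "v \<in> V" "C = fst \<omega>"
    using Cons.IH[OF l Cons.prems(2)] by (cases "Ph (hc.Pl l) \<omega>") (auto simp: Om_def)
  show ?case using Cv e Cons.prems(2) Ph_Kc_act[OF y Cv(2) Cv(3)] U_in[OF Cv(3)]
    by (simp add: compose_def Om_def)
qed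

end


context act begin

lemma Ua_inv: "inv\<^bsub>Q\<^esub> (Ua 1) = Ua (-1)"
proof -
  have "Ua (-1) \<otimes>\<^bsub>Q\<^esub> Ua 1 = \<one>\<^bsub>Q\<^esub>" by (simp add: Ua_mult Ua_one)
  then show ?thesis using group.inv_equality[OF Q_group] Ua_carrier by metis
qed

lemma evw_good: "hnn_word G w \<Longrightarrow> \<exists>y. good (evw Q fm (Ua 1) w) y"
proof (induction w)
  case Nil then show ?case using good_one by (auto simp: evw_def)
next
  case (Cons a w)
  have a: "a \<in> Inl ` carrier G \<union> range Inr" and w: "hnn_word G w"
    using Cons.prems hnn_word_Cons[OF G.group_axioms] by auto
  obtain y where y: "good (evw Q fm (Ua 1) w) y" using Cons.IH[OF w] by blast
  have "\<exists>z. good (evl Q fm (Ua 1) a) z"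
  proof (cases a)
    case (Inl g) then show ?thesis using a good_fm by (auto simp: evl_def)
  next
    case (Inr b) then show ?thesis using good_Ua Ua_inv by (cases b) (auto simp: evl_def)
  qed
  then obtain z where z: "good (evl Q fm (Ua 1) a) z" by blast
  have "evw Q fm (Ua 1) (a # w) = evl Q fm (Ua 1) a \<otimes>\<^bsub>Q\<^esub> evw Q fm (Ua 1) w" by (simp add: evw_def)
  then show ?case using good_comp[OF z y] by auto
qed

lemma img_good: "x \<in> carrier (HNN_trivial G H) \<Longrightarrow> \<exists>y. good (Ph x) y"
proof -
  assume "x \<in> carrier (HNN_trivial G H)"
  then obtain w where "x = hnn_rel G H `` {w}" "hnn_word G w"
    by (auto simp: Gam_carrier[OF G.group_axioms] elim!: quotientE)
  then show ?thesis using evw_good by (simp add: hu.Phi_class)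
qed

lemma kernel_ppin:
  assumes p: "Factorial_Ring.prime p" and a: "card Cs = p ^ a" and e: "nat m = p ^ e"
  shows "p_power_index_normal (HNN_trivial G H) p (kernel (HNN_trivial G H) Q Ph)"
proof -
  let ?I = "Ph ` carrier (HNN_trivial G H)"
  let ?Q' = "Q\<lparr>carrier := ?I\<rparr>"
  have sub: "subgroup ?I Q" using group_hom.img_is_subgroup[OF Ph_gh] .
  have gQ': "group ?Q'" using group.subgroup_imp_group[OF Q_group sub] .
  have finI: "finite ?I" using finite_Q sub subgroup.subset finite_subset by blast
  have K: "card Cs * nat m ^ Suc r = p ^ (a + e * Suc r)" using a e by (simp add: power_add power_mult)
  have "\<And>x. x \<in> carrier ?Q' \<Longrightarrow> x [^]\<^bsub>?Q'\<^esub> (p ^ (a + e * Suc r)) = \<one>\<^bsub>?Q'\<^esub>"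
  proof -
    fix x assume "x \<in> carrier ?Q'"
    then obtain g where g: "g \<in> carrier (HNN_trivial G H)" "x = Ph g" by auto
    obtain y where "good x y" using img_good[OF g(1)] g(2) by blast
    then have "x [^]\<^bsub>Q\<^esub> (p ^ (a + e * Suc r)) = \<one>\<^bsub>Q\<^esub>" using good_exp K by metis
    then show "x [^]\<^bsub>?Q'\<^esub> (p ^ (a + e * Suc r)) = \<one>\<^bsub>?Q'\<^esub>"
      using monoid.nat_pow_consistent[OF group.is_monoid[OF Q_group], of x _ ?I] by simp
  qed
  then obtain n where "order ?Q' = p ^ n" using exponent_p_power[OF gQ' _ p] finI by auto
  then have "card (rcosets\<^bsub>HNN_trivial G H\<^esub> (kernel (HNN_trivial G H) Q Ph)) = p ^ n"
    using kernel_card[OF hc.Gm.group_axioms Q_group Ph_hom] by (simp add: order_def)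
  moreover have "kernel (HNN_trivial G H) Q Ph \<lhd> HNN_trivial G H" using group_hom.normal_kernel[OF Ph_gh] .
  ultimately show ?thesis by (auto simp: p_power_index_normal_def)
qed

end


context act begin

definition "e0 = (\<lambda>k\<in>{..r}. if k = 0 then (1::int) else 0)"

lemma N_Cs: "N \<in> Cs"
proof -
  have NG: "N \<subseteq> carrier G" using Ns subgroup.subset by blast
  have "N #>\<^bsub>G\<^esub> \<one>\<^bsub>G\<^esub> \<in> rcosets\<^bsub>G\<^esub> N" using G.rcosetsI[OF NG] by simp
  then show ?thesis using NG by (simp add: Cs_def)
qed

lemma e0_V: "e0 \<in> V" using m by (auto simp: e0_def V_def)

lemma Ph_Pl_Cons:
  assumes y: "fst y \<in> carrier G" and l: "\<forall>y\<in>set l. fst y \<in> carrier G" and w: "\<omega> \<in> Om"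
  shows "Ph (hc.Pl (y # l)) \<omega> = Ph (hc.Kc (fst y) (snd y)) (Ph (hc.Pl l) \<omega>)"
proof -
  have B1: "Ph (hc.Kc (fst y) (snd y)) \<in> Bij Om"
    using hom_in_carrier[OF Ph_hom hc.Kc_closed[OF y]] by (simp add: BijGroup_carrier)
  have B2: "Ph (hc.Pl l) \<in> Bij Om"
    using hom_in_carrier[OF Ph_hom hc.Pl_closed[OF l]] by (simp add: BijGroup_carrier)
  have e: "Ph (hc.Pl (y # l)) = compose Om (Ph (hc.Kc (fst y) (snd y))) (Ph (hc.Pl l))"
    using y l B1 B2 by (simp add: group_hom.hom_mult[OF Ph_gh] hc.Pl_closed BijGroup_mult)
  then show ?thesis using w by (simp add: compose_def)
qed

lemma compute:
  assumes rl: "hc.red l" and r: "r = length l"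
    and zl: "\<And>k. 1 \<le> k \<Longrightarrow> k \<le> r \<Longrightarrow> zlab k = lab (inv\<^bsub>G\<^esub> (fst (l ! (r - k))) <#\<^bsub>G\<^esub> N)"
  shows "n \<le> r \<Longrightarrow> \<exists>v. Ph (hc.Pl (drop (r - n) l)) (N, e0) = (N, v) \<and> v \<in> V \<and>
      (\<forall>k. n < k \<longrightarrow> k \<le> r \<longrightarrow> v k = 0) \<and> v n = prod_list (map snd (drop (r - n) l)) mod m"
proof (induction n)
  case 0
  have o: "(N, e0) \<in> Om" using N_Cs e0_V by (simp add: Om_def)
  have "drop r l = []" using r by simp
  then have "Ph (hc.Pl (drop r l)) = \<one>\<^bsub>Q\<^esub>" using group_hom.hom_one[OF Ph_gh] by simp
  then have "Ph (hc.Pl (drop (r - 0) l)) (N, e0) = (N, e0)" using o by (simp add: BijGroup_one)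
  moreover have "\<forall>k. 0 < k \<longrightarrow> k \<le> r \<longrightarrow> e0 k = 0" by (simp add: e0_def)
  moreover have "e0 0 = prod_list (map snd (drop (r - 0) l)) mod m"
    using m \<open>drop r l = []\<close> by (simp add: e0_def)
  ultimately show ?case using e0_V by blast
next
  case (Suc n)
  obtain v where v: "Ph (hc.Pl (drop (r - n) l)) (N, e0) = (N, v)" "v \<in> V"
      "\<forall>k. n < k \<longrightarrow> k \<le> r \<longrightarrow> v k = 0" "v n = prod_list (map snd (drop (r - n) l)) mod m"
    using Suc by auto
  define i where "i = r - Suc n"
  have il: "i < length l" using Suc.prems r by (simp add: i_def)
  have dr: "drop (r - Suc n) l = l ! i # drop (r - n) l"
    using Cons_nth_drop_Suc[OF il] Suc.prems by (simp add: i_def Suc_diff_Suc)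
  have lG: "\<forall>y\<in>set l. fst y \<in> carrier G" using hc.red_carrier[OF rl] .
  have c: "fst (l ! i) \<in> carrier G" using lG il by simp
  have restG: "\<forall>y\<in>set (drop (r - n) l). fst y \<in> carrier G" using lG by (meson in_set_dropD)
  have o: "(N, e0) \<in> Om" using N_Cs e0_V by (simp add: Om_def)
  have ic: "inv\<^bsub>G\<^esub> (fst (l ! i)) \<in> carrier G" using c by simp
  have z: "zlab (Suc n) = lab (inv\<^bsub>G\<^esub> (fst (l ! i)) <#\<^bsub>G\<^esub> N)" using zl[of "Suc n"] Suc.prems by (simp add: i_def)
  define v' where "v' = U (zlab (Suc n)) (snd (l ! i)) v"
  have act: "Ph (hc.Pl (drop (r - Suc n) l)) (N, e0) = (N, v')"
    using Ph_Pl_Cons[OF c restG o] dr v(1) Ph_Kc_act[OF c N_Cs v(2)] z by (simp add: v'_def)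
  have v'V: "v' \<in> V" using U_in[OF v(2)] by (simp add: v'_def)
  have hi: "\<forall>k. Suc n < k \<longrightarrow> k \<le> r \<longrightarrow> v' k = 0"
    using v(3) by (auto simp: v'_def U_def)
  have "v' (Suc n) = (v (Suc n) + snd (l ! i) * v n) mod m"
    using Suc.prems by (simp add: v'_def U_def)
  also have "\<dots> = (snd (l ! i) * (prod_list (map snd (drop (r - n) l)) mod m)) mod m"
    using v(3) v(4) Suc.prems by simp
  also have "\<dots> = prod_list (map snd (drop (r - Suc n) l)) mod m"
    using dr by (simp add: mod_mult_right_eq)
  finally show ?case using act v'V hi by blast
qed

lemma separate:
  assumes rl: "hc.red l" and r: "r = length l"
    and zl: "\<And>k. 1 \<le> k \<Longrightarrow> k \<le> r \<Longrightarrow> zlab k = lab (inv\<^bsub>G\<^esub> (fst (l ! (r - k))) <#\<^bsub>G\<^esub> N)"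
    and g: "g \<in> carrier G" and gN: "g \<noteq> \<one>\<^bsub>G\<^esub> \<Longrightarrow> g \<notin> N"
    and ne: "l \<noteq> [] \<or> g \<noteq> \<one>\<^bsub>G\<^esub>"
    and pm: "prod_list (map snd l) mod m \<noteq> 0"
  shows "Ph (hc.Pl l \<otimes>\<^bsub>HNN_trivial G H\<^esub> hc.iota g) \<noteq> \<one>\<^bsub>Q\<^esub>"
proof -
  have lG: "\<forall>y\<in>set l. fst y \<in> carrier G" using hc.red_carrier[OF rl] .
  have o: "(N, e0) \<in> Om" using N_Cs e0_V by (simp add: Om_def)
  have B1: "Ph (hc.Pl l) \<in> Bij Om"
    using hom_in_carrier[OF Ph_hom hc.Pl_closed[OF lG]] by (simp add: BijGroup_carrier)
  have eq: "Ph (hc.Pl l \<otimes>\<^bsub>HNN_trivial G H\<^esub> hc.iota g) = compose Om (Ph (hc.Pl l)) (fm g)"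
    using g lG B1 fm_Bij[OF g]
    by (simp add: group_hom.hom_mult[OF Ph_gh] hc.Pl_closed Ph_iota BijGroup_mult)
  have fg: "fm g (N, e0) = (g <#\<^bsub>G\<^esub> N, e0)" using o by (simp add: fm_def)
  have o2: "(g <#\<^bsub>G\<^esub> N, e0) \<in> Om" using fm_in[OF o g] fg by simp
  have val: "Ph (hc.Pl l \<otimes>\<^bsub>HNN_trivial G H\<^esub> hc.iota g) (N, e0) = Ph (hc.Pl l) (g <#\<^bsub>G\<^esub> N, e0)"
    using eq o fg by (simp add: compose_def)
  show ?thesis
  proof (cases "g \<in> N")
    case True
    then have g1: "g = \<one>\<^bsub>G\<^esub>" using gN by blast
    then have lne: "l \<noteq> []" using ne by simp
    have gN': "g <#\<^bsub>G\<^esub> N = N" using lc_N[OF N_Cs True] .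
    obtain v where v: "Ph (hc.Pl (drop (r - r) l)) (N, e0) = (N, v)" "v r = prod_list (map snd (drop (r - r) l)) mod m"
      using compute[OF rl r zl, of r] by auto
    have "r \<noteq> 0" using lne r by simp
    then have "v r \<noteq> e0 r" using v(2) pm by (simp add: e0_def)
    then have "Ph (hc.Pl l \<otimes>\<^bsub>HNN_trivial G H\<^esub> hc.iota g) (N, e0) \<noteq> (N, e0)"
      using val gN' v(1) by auto
    then show ?thesis using o by (auto simp: BijGroup_one)
  next
    case False
    have "g \<in> g <#\<^bsub>G\<^esub> N" using g Ns by (force simp: l_coset_def intro: subgroup.one_closed)
    then have "g <#\<^bsub>G\<^esub> N \<noteq> N" using False by auto
    then have "fst (Ph (hc.Pl l \<otimes>\<^bsub>HNN_trivial G H\<^esub> hc.iota g) (N, e0)) \<noteq> N"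
      using val Ph_Pl_fst[OF lG o2] by simp
    then show ?thesis using o by (auto simp: BijGroup_one)
  qed
qed

end


lemma ppin_Inter:
  fixes n :: nat
  assumes G: "group G" and p: "Factorial_Ring.prime p" and N0: "p_power_index_normal G p N0"
    and NF: "\<And>j. j < n \<Longrightarrow> p_power_index_normal G p (NF j)"
  shows "p_power_index_normal G p (N0 \<inter> (\<Inter>j\<in>{..<n}. NF j))"
  using NF
proof (induction n)
  case 0 then show ?case using N0 by simp
next
  case (Suc n)
  have "N0 \<inter> (\<Inter>j\<in>{..<Suc n}. NF j) = (N0 \<inter> (\<Inter>j\<in>{..<n}. NF j)) \<inter> NF n"
    by (auto simp: lessThan_Suc)
  then show ?case using ppin_inter[OF G p Suc.IH Suc.prems[of n]] Suc.prems by simp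
qed

lemma n_less_pow: "2 \<le> (p::nat) \<Longrightarrow> n < p ^ n"
proof -
  assume p: "2 \<le> p"
  have "n < 2 ^ n" by (rule less_exp)
  also have "(2::nat) ^ n \<le> p ^ n" using p by (simp add: power_mono)
  finally show ?thesis .
qed

lemma (in group) disj_lab:
  assumes N: "N \<lhd> G" and H: "subgroup H G"
    and c: "c \<in> carrier G" and c': "c' \<in> carrier G"
    and dis: "((inv\<^bsub>G\<^esub> c' \<otimes>\<^bsub>G\<^esub> c) <#\<^bsub>G\<^esub> N) \<inter> H = {}"
  shows "H <#>\<^bsub>G\<^esub> (inv\<^bsub>G\<^esub> c <#\<^bsub>G\<^esub> N) \<noteq> H <#>\<^bsub>G\<^esub> (inv\<^bsub>G\<^esub> c' <#\<^bsub>G\<^esub> N)"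
proof
  assume eq: "H <#>\<^bsub>G\<^esub> (inv\<^bsub>G\<^esub> c <#\<^bsub>G\<^esub> N) = H <#>\<^bsub>G\<^esub> (inv\<^bsub>G\<^esub> c' <#\<^bsub>G\<^esub> N)"
  have Ns: "subgroup N G" using N normal_imp_subgroup by blast
  have "inv\<^bsub>G\<^esub> c' \<in> H <#>\<^bsub>G\<^esub> (inv\<^bsub>G\<^esub> c' <#\<^bsub>G\<^esub> N)"
  proof -
    have "inv\<^bsub>G\<^esub> c' = \<one>\<^bsub>G\<^esub> \<otimes>\<^bsub>G\<^esub> (inv\<^bsub>G\<^esub> c' \<otimes>\<^bsub>G\<^esub> \<one>\<^bsub>G\<^esub>)"
      using c' by simp
    then show ?thesis unfolding set_mult_def l_coset_def
      using subgroup.one_closed[OF H] subgroup.one_closed[OF Ns] by blast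
  qed
  then have "inv\<^bsub>G\<^esub> c' \<in> H <#>\<^bsub>G\<^esub> (inv\<^bsub>G\<^esub> c <#\<^bsub>G\<^esub> N)" using eq by simp
  then obtain h n where hn: "h \<in> H" "n \<in> N" "inv\<^bsub>G\<^esub> c' = h \<otimes>\<^bsub>G\<^esub> (inv\<^bsub>G\<^esub> c \<otimes>\<^bsub>G\<^esub> n)"
    unfolding set_mult_def l_coset_def by blast
  have hG: "h \<in> carrier G" using hn H subgroup.subset by blast
  have nG: "n \<in> carrier G" using hn Ns subgroup.subset by blast
  have inN: "inv\<^bsub>G\<^esub> c \<otimes>\<^bsub>G\<^esub> inv\<^bsub>G\<^esub> n \<otimes>\<^bsub>G\<^esub> c \<in> N"
    using normal.inv_op_closed1[OF N c subgroup.m_inv_closed[OF Ns hn(2)]] .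
  have icn: "inv\<^bsub>G\<^esub> c \<otimes>\<^bsub>G\<^esub> n \<in> carrier G" using c nG by simp
  have "h = inv\<^bsub>G\<^esub> c' \<otimes>\<^bsub>G\<^esub> inv\<^bsub>G\<^esub> (inv\<^bsub>G\<^esub> c \<otimes>\<^bsub>G\<^esub> n)"
    using hn(3) c' hG icn by (simp add: inv_solve_right)
  also have "\<dots> = (inv\<^bsub>G\<^esub> c' \<otimes>\<^bsub>G\<^esub> c) \<otimes>\<^bsub>G\<^esub> (inv\<^bsub>G\<^esub> c \<otimes>\<^bsub>G\<^esub> inv\<^bsub>G\<^esub> n \<otimes>\<^bsub>G\<^esub> c)"
  proof -
    have cc: "c \<otimes>\<^bsub>G\<^esub> (inv\<^bsub>G\<^esub> c \<otimes>\<^bsub>G\<^esub> x) = x" if "x \<in> carrier G" for x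
      using c that by (simp add: m_assoc[symmetric])
    show ?thesis using c c' nG cc[of "inv\<^bsub>G\<^esub> n \<otimes>\<^bsub>G\<^esub> c"] by (simp add: inv_mult_group m_assoc)
  qed
  finally have "h \<in> (inv\<^bsub>G\<^esub> c' \<otimes>\<^bsub>G\<^esub> c) <#\<^bsub>G\<^esub> N" using inN unfolding l_coset_def by blast
  then show False using dis hn(1) by blast
qed


context hnn_ctx begin

lemma red_nth: "red l \<Longrightarrow> Suc j < length l \<Longrightarrow> inv\<^bsub>G\<^esub> (fst (l ! j)) \<otimes>\<^bsub>G\<^esub> fst (l ! Suc j) \<notin> H"
proof (induction l arbitrary: j)
  case (Cons y l)
  show ?case
  proof (cases j)
    case 0
    then obtain z l' where "l = z # l'" using Cons.prems by (cases l) auto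
    then show ?thesis using Cons.prems 0 by simp
  next
    case (Suc j')
    then show ?thesis using Cons by simp
  qed
qed simp

lemma red_prod: "red l \<Longrightarrow> prod_list (map snd l) \<noteq> 0"
  by (induction l) auto

end

theorem lemma2p9:
  fixes G :: "('a, 'b) monoid_scheme" and H :: "'a set" and p :: nat
  assumes "Factorial_Ring.prime p"
    and "group G"
    and "subgroup H G"
    and "\<And>q::nat. Factorial_Ring.prime q \<Longrightarrow> closedin (pro_p_topology G q) H"
    and "residually_p_finite G p"
  shows "residually_p_finite (HNN_trivial G H) p"
proof -
  have p: "Factorial_Ring.prime p" and Gg: "group G" and Hs: "subgroup H G" using assms by auto
  interpret hnn_ctx G H using Gg Hs by (intro hnn_ctx.intro hnn_ctx_axioms.intro)
  have cl: "closedin (pro_p_topology G p) H" using assms(4)[OF p] .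
  show ?thesis unfolding residually_p_finite_def
  proof (intro ballI impI)
    fix \<gamma> assume \<gamma>: "\<gamma> \<in> carrier (HNN_trivial G H)" and ne1: "\<gamma> \<noteq> \<one>\<^bsub>HNN_trivial G H\<^esub>"
    obtain w where w: "\<gamma> = R `` {w}" "hnn_word G w"
      using \<gamma> by (auto simp: Gam_carrier[OF Gg] elim!: quotientE)
    obtain l g where lg: "red l" "g \<in> carrier G" "\<gamma> = Pl l \<otimes>\<^bsub>Gam\<^esub> iota g"
      using normal_form[OF w(2)] w(1) by auto
    have ne: "l \<noteq> [] \<or> g \<noteq> \<one>\<^bsub>G\<^esub>"
    proof (rule ccontr)
      assume "\<not> (l \<noteq> [] \<or> g \<noteq> \<one>\<^bsub>G\<^esub>)"
      then have "\<gamma> = \<one>\<^bsub>Gam\<^esub>" using lg by simp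
      then show False using ne1 by simp
    qed
    define r where "r = length l"
    obtain N0 where N0: "p_power_index_normal G p N0" "g \<noteq> \<one>\<^bsub>G\<^esub> \<Longrightarrow> g \<notin> N0"
    proof (cases "g = \<one>\<^bsub>G\<^esub>")
      case True then show ?thesis using that ppin_carrier[OF Gg] by blast
    next
      case False
      then obtain N0 where "p_power_index_normal G p N0" "g \<notin> N0"
        using assms(5) lg(2) by (auto simp: residually_p_finite_def)
      then show ?thesis using that by blast
    qed
    define xs where "xs j = inv\<^bsub>G\<^esub> (fst (l ! j)) \<otimes>\<^bsub>G\<^esub> fst (l ! Suc j)" for j
    have lG: "\<forall>y\<in>set l. fst y \<in> carrier G" using red_carrier[OF lg(1)] .
    have lGn: "i < r \<Longrightarrow> fst (l ! i) \<in> carrier G" for i using lG by (simp add: r_def)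
    have xsG: "Suc j < r \<Longrightarrow> xs j \<in> carrier G" for j using lGn[of j] lGn[of "Suc j"] by (simp add: xs_def)
    have xsH: "Suc j < r \<Longrightarrow> xs j \<notin> H" for j using red_nth[OF lg(1)] by (simp add: xs_def r_def)
    have "\<forall>j. \<exists>Nj. Suc j < r \<longrightarrow> p_power_index_normal G p Nj \<and> (xs j <#\<^bsub>G\<^esub> Nj) \<inter> H = {}"
      using closed_sep[OF Gg p cl] xsG xsH by metis
    then obtain NF where NF: "\<And>j. Suc j < r \<Longrightarrow> p_power_index_normal G p (NF j) \<and> (xs j <#\<^bsub>G\<^esub> NF j) \<inter> H = {}"
      by metis
    define N where "N = N0 \<inter> (\<Inter>j\<in>{..<r - 1}. NF j)"
    have Np: "p_power_index_normal G p N"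
      unfolding N_def using NF by (intro ppin_Inter[OF Gg p N0(1)]) auto
    have dis: "Suc j < r \<Longrightarrow> (xs j <#\<^bsub>G\<^esub> N) \<inter> H = {}" for j
    proof -
      assume j: "Suc j < r"
      have "N \<subseteq> NF j" using j by (auto simp: N_def)
      then have "xs j <#\<^bsub>G\<^esub> N \<subseteq> xs j <#\<^bsub>G\<^esub> NF j" by (auto simp: l_coset_def)
      then show ?thesis using NF[OF j] by blast
    qed
    have gN: "g \<noteq> \<one>\<^bsub>G\<^esub> \<Longrightarrow> g \<notin> N" using N0(2) by (auto simp: N_def)
    define P where "P = prod_list (map snd l)"
    have P0: "P \<noteq> 0" using red_prod[OF lg(1)] by (simp add: P_def)
    define e where "e = nat \<bar>P\<bar>"
    define m :: int where "m = int (p ^ e)"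
    have p2: "2 \<le> p" using p prime_ge_2_nat by blast
    have "int e < int (p ^ e)" using n_less_pow[OF p2, of e] by (simp only: of_nat_less_iff)
    moreover have "\<bar>P\<bar> = int e" by (simp add: e_def)
    ultimately have Pm: "\<bar>P\<bar> < m" by (simp add: m_def)
    have m1: "m > 1" using Pm P0 by simp
    have pm: "P mod m \<noteq> 0"
    proof
      assume "P mod m = 0"
      then have "m dvd P" by (simp add: dvd_eq_mod_eq_0)
      then have "\<bar>m\<bar> \<le> \<bar>P\<bar>" using dvd_imp_le_int[OF P0] by blast
      then show False using Pm m1 by simp
    qed
    define zlab where "zlab k = H <#>\<^bsub>G\<^esub> (inv\<^bsub>G\<^esub> (fst (l ! (r - k))) <#\<^bsub>G\<^esub> N)" for k
    have Nn: "N \<lhd> G" using Np by (simp add: p_power_index_normal_def)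
    have zd: "zlab k \<noteq> zlab (Suc k)" if k: "1 \<le> k" "k < r" for k
    proof -
      define j where "j = r - Suc k"
      have j1: "Suc j < r" using k by (simp add: j_def)
      have e1: "r - k = Suc j" and e2: "r - Suc k = j" using k by (simp_all add: j_def)
      show ?thesis
        unfolding zlab_def e1 e2
        using group.disj_lab[OF Gg Nn Hs lGn[OF j1] lGn[of j] dis[OF j1, unfolded xs_def]] j1 by simp
    qed
    interpret A: act G H N r m zlab
      using Gg Nn Hs ppin_finite[OF p Np] m1 zd by (intro act.intro act_axioms.intro) auto
    obtain a where a: "card A.Cs = p ^ a" using Np by (auto simp: A.Cs_def p_power_index_normal_def)
    have e': "nat m = p ^ e" unfolding m_def by (rule nat_int)
    have kp: "p_power_index_normal (HNN_trivial G H) p (kernel (HNN_trivial G H) A.Q A.Ph)"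
      using A.kernel_ppin[OF p a e'] .
    have zl: "zlab k = A.lab (inv\<^bsub>G\<^esub> (fst (l ! (r - k))) <#\<^bsub>G\<^esub> N)" for k
      by (simp add: zlab_def A.lab_def)
    have "A.Ph (Pl l \<otimes>\<^bsub>HNN_trivial G H\<^esub> iota g) \<noteq> \<one>\<^bsub>A.Q\<^esub>"
      using A.separate[OF lg(1) r_def zl lg(2) gN ne] pm by (simp add: P_def)
    then have "\<gamma> \<notin> kernel (HNN_trivial G H) A.Q A.Ph" using lg(3) by (simp add: kernel_def)
    then show "\<exists>N. p_power_index_normal (HNN_trivial G H) p N \<and> \<gamma> \<notin> N" using kp by blast
  qed
qed


end
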